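(* Assume $\lambda<1-\frac1d$ and let $x^\star$ be the unique fixed point. For every fluid solution $x$ there exist constants $\alpha>0$ and $\beta>0$, independent of $t$, such that $\|x(t)-x^\star\|\le\alpha e^{-\beta t}$ for all $t\ge0$, where $\|\cdot\|$ is the Euclidean norm.
   Context: Fix $\lambda\in(0,1)$, an integer $d\ge2$ and an integer $I>1$. $\mathcal S=\{x=(x_{i,j})_{0\le i\le j\le I}: x_{i,j}\ge0,\ \sum_{i=0}^I\sum_{j=i}^I x_{i,j}=1\}$; $x_{i,\cdot}=\sum_{j=i}^I x_{i,j}$, $x_{\cdot,j}=\sum_{i=0}^j x_{i,j}$. For $0\le j\le I$: $\mathcal R_j(x)=\max\{0,\lambda(1-d\sum_{i=0}^j(j+1-i)x_{i,\cdot})\}\,\mathbf 1\{\sum_{i=0}^j x_{\cdot,i}=0\}$, $\mathcal G_j(x)=\lambda d\,\mathbf 1\{\sum_{i=0}^j x_{\cdot,i}=0,\ d\sum_{i=0}^j(j+1-i)x_{i,\cdot}\le1\}\sum_{i=0}^j x_{i,\cdot}$. Write $\rho_k^{a,b}(x)=\mathcal R_k(x)\frac{x_{a,b}}{x_{\cdot,b}}\mathbf 1\{x_{\cdot,b}>0\}$ (equal to $0$ when $x_{\cdot,b}=0$). The drift $b(x)$ is: $b_{0,0}=\lambda d(x_{0,\cdot}-x_{0,0})-\lambda+\mathcal R_0(x)$; for $i<j$: $b_{i,j}=x_{i+1,j}-\mathbf 1\{i>0\}x_{i,j}-\lambda d x_{i,j}-\rho_{j-1}^{i,j}+\mathbf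 1\{i>0\}\rho_{j-2}^{i-1,j-1}+\mathbf 1\{j=I,i>0\}\rho_{I-1}^{i-1,I}$; $b_{1,1}=-x_{1,1}+\lambda d(x_{1,\cdot}-x_{1,1})+\lambda-\mathcal R_0(x)-\rho_0^{1,1}-\mathcal G_1(x)$; for $2\le i\le I-1$: $b_{i,i}=-x_{i,i}+\lambda d(x_{i,\cdot}-x_{i,i})-\rho_{i-1}^{i,i}+\rho_{i-2}^{i-1,i-1}+\mathcal G_{i-1}(x)-\mathcal G_i(x)$; $b_{I,I}=-x_{I,I}+\rho_{I-2}^{I-1,I-1}+\mathcal G_{I-1}(x)+\rho_{I-1}^{I-1,I}$. A fluid solution is an absolutely continuous $x:\mathbb R_+\to\mathcal S$ with $\dot x_{i,j}(t)=b_{i,j}(x(t))$ for a.e. $t$ and all $i\le j$. A fixed point is a fluid solution with $b(x(t))=0$ for all $t\ge0$ (hence constant, identified with a point of $\mathcal S$); for $\lambda<1-1/d$ it is $x^\star_{0,0}=1-\lambda-1/d$, $x^\star_{0,1}=1/d$, $x^\star_{1,1}=\lambda$, other coordinates $0$. *)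

theory Defs
  imports "HOL-Analysis.Analysis"
begin

text \<open>States are functions x :: nat => nat => real; only the coordinates (i,j)
  with 0 <= i <= j <= I are meaningful, the others are required to be 0.\<close>

definition idx :: "nat \<Rightarrow> (nat \<times> nat) set" where
  "idx I = {(i, j). i \<le> j \<and> j \<le> I}"

definition simplexS :: "nat \<Rightarrow> (nat \<Rightarrow> nat \<Rightarrow> real) set" where
  "simplexS I = {x. (\<forall>i j. (i, j) \<notin> idx I \<longrightarrow> x i j = 0)
                  \<and> (\<forall>i j. x i j \<ge> 0)
                  \<and> (\<Sum>i=0..I. \<Sum>j=i..I. x i j) = 1}"

definition xrow :: "nat \<Rightarrow> (nat \<Rightarrow> nat \<Rightarrow> real) \<Rightarrow> nat \<Rightarrow> real" where
  "xrow I x i = (\<Sum>j=i..I. x i j)"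

definition xcol :: "(nat \<Rightarrow> nat \<Rightarrow> real) \<Rightarrow> nat \<Rightarrow> real" where
  "xcol x j = (\<Sum>i=0..j. x i j)"

definition Rf :: "real \<Rightarrow> nat \<Rightarrow> nat \<Rightarrow> nat \<Rightarrow> (nat \<Rightarrow> nat \<Rightarrow> real) \<Rightarrow> real" where
  "Rf lam d I j x =
     (if (\<Sum>i=0..j. xcol x i) = 0
      then max 0 (lam * (1 - real d * (\<Sum>i=0..j. real (j + 1 - i) * xrow I x i)))
      else 0)"

definition Gf :: "real \<Rightarrow> nat \<Rightarrow> nat \<Rightarrow> nat \<Rightarrow> (nat \<Rightarrow> nat \<Rightarrow> real) \<Rightarrow> real" where
  "Gf lam d I j x =
     lam * real d *
     (if (\<Sum>i=0..j. xcol x i) = 0 \<and> real d * (\<Sum>i=0..j. real (j + 1 - i) * xrow I x i) \<le> 1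
      then 1 else 0) * (\<Sum>i=0..j. xrow I x i)"

definition rho :: "real \<Rightarrow> nat \<Rightarrow> nat \<Rightarrow> nat \<Rightarrow> nat \<Rightarrow> nat \<Rightarrow> (nat \<Rightarrow> nat \<Rightarrow> real) \<Rightarrow> real" where
  "rho lam d I k a b x = (if xcol x b > 0 then Rf lam d I k x * x a b / xcol x b else 0)"

definition drift :: "real \<Rightarrow> nat \<Rightarrow> nat \<Rightarrow> (nat \<Rightarrow> nat \<Rightarrow> real) \<Rightarrow> nat \<Rightarrow> nat \<Rightarrow> real" where
  "drift lam d I x i j =
    (if i = 0 \<and> j = 0 then
       lam * real d * (xrow I x 0 - x 0 0) - lam + Rf lam d I 0 x
     else if i < j then
       x (i + 1) j - (if i > 0 then x i j else 0) - lam * real d * x i j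
       - rho lam d I (j - 1) i j x
       + (if i > 0 then rho lam d I (j - 2) (i - 1) (j - 1) x else 0)
       + (if j = I \<and> i > 0 then rho lam d I (I - 1) (i - 1) I x else 0)
     else if i = 1 \<and> j = 1 then
       - x 1 1 + lam * real d * (xrow I x 1 - x 1 1) + lam - Rf lam d I 0 x
       - rho lam d I 0 1 1 x - Gf lam d I 1 x
     else if i = j \<and> 2 \<le> i \<and> i \<le> I - 1 then
       - x i i + lam * real d * (xrow I x i - x i i)
       - rho lam d I (i - 1) i i x + rho lam d I (i - 2) (i - 1) (i - 1) x
       + Gf lam d I (i - 1) x - Gf lam d I i x
     else if i = I \<and> j = I then
       - x I I + rho lam d I (I - 2) (I - 1) (I - 1) x + Gf lam d I (I - 1) x
       + rho lam d I (I - 1) (I - 1) I x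
     else 0)"

definition abs_cont_on_interval :: "(real \<Rightarrow> real) \<Rightarrow> real \<Rightarrow> real \<Rightarrow> bool" where
  "abs_cont_on_interval f a b \<longleftrightarrow>
     (\<forall>\<epsilon>>0. \<exists>\<delta>>0. \<forall>(n::nat) (l::nat \<Rightarrow> real) (r::nat \<Rightarrow> real).
        (\<forall>k<n. a \<le> l k \<and> l k \<le> r k \<and> r k \<le> b)
        \<and> (\<forall>k<n. \<forall>m<n. k \<noteq> m \<longrightarrow> r k \<le> l m \<or> r m \<le> l k)
        \<and> (\<Sum>k<n. r k - l k) < \<delta>
        \<longrightarrow> (\<Sum>k<n. \<bar>f (r k) - f (l k)\<bar>) < \<epsilon>)"

definition fluid_solution :: "real \<Rightarrow> nat \<Rightarrow> nat \<Rightarrow> (real \<Rightarrow> nat \<Rightarrow> nat \<Rightarrow> real) \<Rightarrow> bool" where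
  "fluid_solution lam d I x \<longleftrightarrow>
     (\<forall>t\<ge>0. x t \<in> simplexS I)
     \<and> (\<forall>i j T. (i, j) \<in> idx I \<longrightarrow> T \<ge> 0 \<longrightarrow> abs_cont_on_interval (\<lambda>t. x t i j) 0 T)
     \<and> (AE t in lborel. t \<ge> 0 \<longrightarrow>
          (\<forall>i j. (i, j) \<in> idx I \<longrightarrow>
             ((\<lambda>s. x s i j) has_real_derivative drift lam d I (x t) i j) (at t)))"

definition xstar :: "real \<Rightarrow> nat \<Rightarrow> nat \<Rightarrow> nat \<Rightarrow> real" where
  "xstar lam d i j =
     (if i = 0 \<and> j = 0 then 1 - lam - 1 / real d
      else if i = 0 \<and> j = 1 then 1 / real d
      else if i = 1 \<and> j = 1 then lam
      else 0)"

definition state_dist :: "nat \<Rightarrow> (nat \<Rightarrow> nat \<Rightarrow> real) \<Rightarrow> (nat \<Rightarrow> nat \<Rightarrow> real) \<Rightarrow> real" where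
  "state_dist I x y = sqrt (\<Sum>(i, j)\<in>idx I. (x i j - y i j)\<^sup>2)"

end

theory Submission
  imports Defs
begin


lemma null_open_cover:
  fixes N :: "real set"
  assumes "N \<in> null_sets lborel" "\<delta> > 0"
  obtains U where "open U" "N \<subseteq> U" "U \<in> lmeasurable" "measure lebesgue U < \<delta>"
proof -
  have N: "N \<in> null_sets lebesgue"
    using null_sets_completionI[OF assms(1)] by simp
  then have Ns: "N \<in> sets lebesgue" by auto
  obtain T where T: "open T" "N \<subseteq> T" "(T - N) \<in> lmeasurable" "emeasure lebesgue (T - N) < ennreal \<delta>"
    using sets_lebesgue_outer_open[OF Ns assms(2)] by blast
  have Nf: "N \<in> lmeasurable" using N by (simp add: null_sets_def fmeasurableI)
  have TU: "T = (T - N) \<union> N" using T(2) by blast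
  have Tm: "T \<in> lmeasurable" using TU T(3) Nf fmeasurable.Un by metis
  have "measure lebesgue T \<le> measure lebesgue (T - N) + measure lebesgue N"
    apply (subst TU) apply (rule measure_Un_le) using T(3) Nf by (auto simp: fmeasurable_def)
  also have "measure lebesgue N = 0" using N by (simp add: measure_eq_0_null_sets)
  also have "measure lebesgue (T - N) < \<delta>"
  proof -
    have "ennreal (measure lebesgue (T - N)) < ennreal \<delta>"
      using T(4) emeasure_eq_measure2[OF T(3)] by simp
    then show ?thesis using ennreal_less_iff[of "measure lebesgue (T - N)" \<delta>] by simp
  qed
  finally show ?thesis using that T Tm by auto
qed

lemma tag_interval:
  assumes "p tagged_division_of {a..b::real}" "(x, K) \<in> p"
  obtains u v where "K = {u..v}" "u \<le> x" "x \<le> v" "a \<le> u" "v \<le> b" "Inf K = u" "Sup K = v"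
proof -
  obtain u v where K: "K = cbox u v" using tagged_division_ofD(4)[OF assms] by blast
  then have K': "K = {u..v}" by simp
  have "x \<in> K" using tagged_division_ofD(2)[OF assms] .
  then have uv: "u \<le> x" "x \<le> v" using K' by auto
  have "K \<subseteq> {a..b}" using tagged_division_ofD(3)[OF assms] .
  then have "a \<le> u" "v \<le> b" using K' uv by auto
  then show ?thesis using that K' uv by auto
qed

lemma disjoint_open_intervals:
  fixes u1 v1 u2 v2 :: real
  assumes "u1 < v1" "u2 < v2" "interior {u1..v1} \<inter> interior {u2..v2} = {}"
  shows "v1 \<le> u2 \<or> v2 \<le> u1"
proof (rule ccontr)
  assume "\<not> (v1 \<le> u2 \<or> v2 \<le> u1)"
  then have "u2 < v1" "u1 < v2" by auto
  define m where "m = (max u1 u2 + min v1 v2) / 2"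
  have "m \<in> {u1<..<v1}" "m \<in> {u2<..<v2}" using assms \<open>u2 < v1\<close> \<open>u1 < v2\<close>
    by (auto simp: m_def max_def min_def)
  then show False using assms(3) by auto
qed

lemma ac_mono:
  fixes f :: "real \<Rightarrow> real"
  assumes ac: "abs_cont_on_interval f a b" and ab: "a \<le> b"
    and N: "N \<in> null_sets lborel"
    and der: "\<And>t. t \<in> {a<..<b} \<Longrightarrow> t \<notin> N \<Longrightarrow> \<exists>D. (f has_real_derivative D) (at t) \<and> D \<le> 0"
  shows "f b \<le> f a"
proof -
  have key: "f b - f a \<le> \<eta> + \<epsilon> * (b - a)" if eta: "\<eta> > 0" and eps: "\<epsilon> > 0" for \<eta> \<epsilon>
  proof -
    obtain \<delta> where dpos: "\<delta> > 0" and acd0: "\<forall>(n::nat) (l::nat \<Rightarrow> real) (r::nat \<Rightarrow> real).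
        (\<forall>k<n. a \<le> l k \<and> l k \<le> r k \<and> r k \<le> b)
        \<and> (\<forall>k<n. \<forall>m<n. k \<noteq> m \<longrightarrow> r k \<le> l m \<or> r m \<le> l k)
        \<and> (\<Sum>k<n. r k - l k) < \<delta>
        \<longrightarrow> (\<Sum>k<n. \<bar>f (r k) - f (l k)\<bar>) < \<eta>"
      using ac eta unfolding abs_cont_on_interval_def by blast
    note acd = acd0[rule_format, OF conjI[OF _ conjI]]
    define N' where "N' = N \<union> {a, b}"
    have N'null: "N' \<in> null_sets lborel" unfolding N'_def
      by (rule null_sets.Un[OF N finite_imp_null_set_lborel]) simp
    obtain U where U: "open U" "N' \<subseteq> U" "U \<in> lmeasurable" "measure lebesgue U < \<delta>"
      using null_open_cover[OF N'null dpos] by blast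
    define g where "g t = f t - \<epsilon> * t" for t
    have gauge_ex: "\<exists>r>0. (t \<in> N' \<longrightarrow> ball t r \<subseteq> U) \<and>
        (t \<in> {a..b} \<and> t \<notin> N' \<longrightarrow> (\<forall>h>0. h < r \<longrightarrow> g (t + h) < g t \<and> g t < g (t - h)))" for t
    proof (cases "t \<in> N'")
      case True
      then obtain r where "r > 0" "ball t r \<subseteq> U" using U(1,2) open_contains_ball by blast
      then show ?thesis using True by blast
    next
      case False
      show ?thesis
      proof (cases "t \<in> {a..b}")
        case True
        with False have "t \<in> {a<..<b}" "t \<notin> N" unfolding N'_def by auto
        then obtain D where D: "(f has_real_derivative D) (at t)" "D \<le> 0" using der by blast
        have gD: "(g has_real_derivative (D - \<epsilon>)) (at t)"
          unfolding g_def by (auto intro!: derivative_eq_intros D)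
        have neg: "D - \<epsilon> < 0" using D(2) eps by simp
        obtain d1 where d1: "d1 > 0" "\<forall>h>0. h < d1 \<longrightarrow> g (t + h) < g t"
          using DERIV_neg_dec_right[OF gD neg] by blast
        obtain d2 where d2: "d2 > 0" "\<forall>h>0. h < d2 \<longrightarrow> g t < g (t - h)"
          using DERIV_neg_dec_left[OF gD neg] by blast
        show ?thesis using False d1 d2
          by (intro exI[of _ "min d1 d2"]) auto
      next
        case False2: False
        show ?thesis using False False2 by (intro exI[of _ 1]) auto
      qed
    qed
    then obtain r where r: "\<And>t. r t > 0"
      "\<And>t. t \<in> N' \<Longrightarrow> ball t (r t) \<subseteq> U"
      "\<And>t h. t \<in> {a..b} \<Longrightarrow> t \<notin> N' \<Longrightarrow> h > 0 \<Longrightarrow> h < r t \<Longrightarrow> g (t + h) < g t \<and> g t < g (t - h)"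
      by metis
    have "gauge (\<lambda>t. ball t (r t))" using r(1) by (simp add: gauge_ball_dependent)
    then obtain p where p: "p tagged_division_of {a..b}" "(\<lambda>t. ball t (r t)) fine p"
      using fine_division_exists_real by blast
    have add: "(\<Sum>(x,K)\<in>p. g (Sup K) - g (Inf K)) = g b - g a"
      using additive_tagged_division_1[OF ab p(1)] by simp
    have finp: "finite p" using p(1) by blast
    define p1 where "p1 = {(x,K) \<in> p. x \<in> N' \<and> Inf K < Sup K}"
    have p1sub: "p1 \<subseteq> p" unfolding p1_def by auto
    have finp1: "finite p1" using finp p1sub finite_subset by blast
    have rest: "g (Sup K) - g (Inf K) \<le> 0" if xKin: "(x,K) \<in> p - p1" for x K
    proof -
      obtain u v where uv: "K = {u..v}" "u \<le> x" "x \<le> v" "a \<le> u" "v \<le> b" "Inf K = u" "Sup K = v"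
        using tag_interval[OF p(1), of x K] xKin by blast
      have sub: "K \<subseteq> ball x (r x)" using p(2) xKin by (auto simp: fine_def)
      show ?thesis
      proof (cases "x \<in> N' \<and> u < v")
        case True
        then have "(x,K) \<in> p1" using xKin uv unfolding p1_def by auto
        then show ?thesis using xKin by auto
      next
        case False
        show ?thesis
        proof (cases "u < v")
          case False
          then have "u = v" using uv by auto
          then show ?thesis using uv by auto
        next
          case True
          with False have xN: "x \<notin> N'" by auto
          have xab: "x \<in> {a..b}" using uv by auto
          have vr0: "\<forall>t. u \<le> t \<and> t \<le> v \<longrightarrow> \<bar>x - t\<bar> < r x"
            using sub uv by (auto simp: subset_iff dist_real_def)
          have vr: "v - x < r x" "x - u < r x"
            using vr0[rule_format, of v] vr0[rule_format, of u] uv by auto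
          have gv: "g v \<le> g x"
          proof (cases "v = x")
            case False
            then have "g (x + (v - x)) < g x" using r(3)[OF xab xN, of "v - x"] vr uv by auto
            then show ?thesis by simp
          qed simp
          have gu: "g x \<le> g u"
          proof (cases "u = x")
            case False
            then have "g x < g (x - (x - u))" using r(3)[OF xab xN, of "x - u"] vr uv by auto
            then show ?thesis by simp
          qed simp
          show ?thesis using gv gu uv by simp
        qed
      qed
    qed
    have "g b - g a = (\<Sum>(x,K)\<in>p1. g (Sup K) - g (Inf K)) + (\<Sum>(x,K)\<in>p - p1. g (Sup K) - g (Inf K))"
      using add sum.subset_diff[OF p1sub finp, of "\<lambda>(x,K). g (Sup K) - g (Inf K)"] by simp
    also have "(\<Sum>(x,K)\<in>p - p1. g (Sup K) - g (Inf K)) \<le> 0"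
      using rest by (intro sum_nonpos) auto
    also have "(\<Sum>(x,K)\<in>p1. g (Sup K) - g (Inf K)) \<le> (\<Sum>(x,K)\<in>p1. \<bar>f (Sup K) - f (Inf K)\<bar>)"
    proof (intro sum_mono)
      fix z assume "z \<in> p1"
      then show "(case z of (x, K) \<Rightarrow> g (Sup K) - g (Inf K)) \<le> (case z of (x, K) \<Rightarrow> \<bar>f (Sup K) - f (Inf K)\<bar>)"
        using eps unfolding p1_def g_def apply clarsimp
        subgoal for x y using mult_strict_left_mono[of "Inf y" "Sup y" \<epsilon>] abs_ge_self[of "f (Sup y) - f (Inf y)"]
          by linarith
        done
    qed
    also have "(\<Sum>(x,K)\<in>p1. \<bar>f (Sup K) - f (Inf K)\<bar>) < \<eta>"
    proof -
      obtain h where h: "bij_betw h {0..<card p1} p1" using ex_bij_betw_nat_finite[OF finp1] by blast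
      define n where "n = card p1"
      define l where "l k = Inf (snd (h k))" for k
      define rr where "rr k = Sup (snd (h k))" for k
      have hp1: "h k \<in> p1" if "k < n" for k using h that unfolding n_def bij_betw_def by auto
      have ivl: "\<exists>u v. snd (h k) = {u..v} \<and> a \<le> u \<and> u < v \<and> v \<le> b \<and> l k = u \<and> rr k = v \<and> fst (h k) \<in> N'"
        if "k < n" for k
      proof -
        obtain x K where xK: "h k = (x, K)" by fastforce
        have inp: "(x,K) \<in> p" and xN: "x \<in> N'" and lt: "Inf K < Sup K"
          using hp1[OF that] xK unfolding p1_def by auto
        obtain u v where uv: "K = {u..v}" "u \<le> x" "x \<le> v" "a \<le> u" "v \<le> b" "Inf K = u" "Sup K = v"
          using tag_interval[OF p(1) inp] by blast
        show ?thesis using uv lt xK xN unfolding l_def rr_def by auto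
      qed
      have c1: "\<forall>k<n. a \<le> l k \<and> l k \<le> rr k \<and> rr k \<le> b"
        using ivl by fastforce
      have c2: "\<forall>k<n. \<forall>m<n. k \<noteq> m \<longrightarrow> rr k \<le> l m \<or> rr m \<le> l k"
      proof (intro allI impI)
        fix k m assume km: "k < n" "m < n" "k \<noteq> m"
        have ne: "h k \<noteq> h m" using h km unfolding n_def bij_betw_def inj_on_def by auto
        obtain u1 v1 where 1: "snd (h k) = {u1..v1}" "u1 < v1" "l k = u1" "rr k = v1" using ivl[OF km(1)] by blast
        obtain u2 v2 where 2: "snd (h m) = {u2..v2}" "u2 < v2" "l m = u2" "rr m = v2" using ivl[OF km(2)] by blast
        have "interior (snd (h k)) \<inter> interior (snd (h m)) = {}"
          using tagged_division_ofD(5)[OF p(1), of "fst (h k)" "snd (h k)" "fst (h m)" "snd (h m)"]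
            hp1[OF km(1)] hp1[OF km(2)] ne p1sub by auto
        then show "rr k \<le> l m \<or> rr m \<le> l k"
          using disjoint_open_intervals[of u1 v1 u2 v2] 1 2 by auto
      qed
      have sumeq: "(\<Sum>k<n. G (h k)) = (\<Sum>z\<in>p1. G z)" for G :: "real \<times> real set \<Rightarrow> real"
        using sum.reindex_bij_betw[OF h, of G] unfolding n_def by (simp add: atLeast0LessThan)
      have "(\<Sum>k<n. rr k - l k) = (\<Sum>z\<in>p1. Sup (snd z) - Inf (snd z))"
        using sumeq[of "\<lambda>z. Sup (snd z) - Inf (snd z)"] unfolding l_def rr_def by simp
      also have "\<dots> = (\<Sum>z\<in>p1. measure lebesgue (snd z))"
      proof (intro sum.cong refl)
        fix z assume "z \<in> p1"
        then obtain x K where z: "z = (x,K)" "(x,K) \<in> p" "Inf K < Sup K" unfolding p1_def by auto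
        obtain u v where uv: "K = {u..v}" "u \<le> x" "x \<le> v" "Inf K = u" "Sup K = v"
          using tag_interval[OF p(1) z(2)] by blast
        show "Sup (snd z) - Inf (snd z) = measure lebesgue (snd z)" using z uv by simp
      qed
      also have "\<dots> = measure lebesgue (\<Union>(snd ` p1))"
      proof (rule measure_negligible_finite_Union_image[symmetric, OF finp1])
        fix z assume "z \<in> p1"
        then obtain x K where z: "z = (x,K)" "(x,K) \<in> p" unfolding p1_def by auto
        obtain u v where uv: "K = {u..v}" using tag_interval[OF p(1) z(2)] by blast
        show "snd z \<in> lmeasurable" using z uv by simp
      next
        show "pairwise (\<lambda>z w. negligible (snd z \<inter> snd w)) p1"
        unfolding pairwise_def
        proof (intro ballI impI)
          fix z w assume zw: "z \<in> p1" "w \<in> p1" "z \<noteq> w"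
          obtain x1 K1 where z1: "z = (x1,K1)" by fastforce
          obtain x2 K2 where w2: "w = (x2,K2)" by fastforce
          have z: "(x1, K1) \<in> p1" "(x2, K2) \<in> p1" "(x1,K1) \<noteq> (x2, K2)" using zw z1 w2 by auto
          then have zp: "(x1,K1) \<in> p" "(x2,K2) \<in> p" "Inf K1 < Sup K1" "Inf K2 < Sup K2"
            unfolding p1_def by auto
          obtain u1 v1 where 1: "K1 = {u1..v1}" "Inf K1 = u1" "Sup K1 = v1" using tag_interval[OF p(1) zp(1)] by blast
          obtain u2 v2 where 2: "K2 = {u2..v2}" "Inf K2 = u2" "Sup K2 = v2" using tag_interval[OF p(1) zp(2)] by blast
          have "interior K1 \<inter> interior K2 = {}"
            using tagged_division_ofD(5)[OF p(1) zp(1) zp(2) z(3)] .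
          then have "v1 \<le> u2 \<or> v2 \<le> u1" using disjoint_open_intervals[of u1 v1 u2 v2] 1 2 zp by auto
          then have "K1 \<inter> K2 \<subseteq> {v1} \<or> K1 \<inter> K2 \<subseteq> {v2}" using 1 2 by auto
          then have "negligible (K1 \<inter> K2)"
            by (meson negligible_sing negligible_subset)
          then show "negligible (snd z \<inter> snd w)" using z1 w2 by simp
        qed
      qed
      also have "\<dots> \<le> measure lebesgue U"
      proof (rule measure_mono_fmeasurable)
        show "\<Union>(snd ` p1) \<subseteq> U"
        proof
          fix y assume "y \<in> \<Union>(snd ` p1)"
          then obtain x K where xK: "(x,K) \<in> p1" "y \<in> K" by auto
          then have "x \<in> N'" "(x,K) \<in> p" unfolding p1_def by auto
          moreover have "K \<subseteq> ball x (r x)" using p(2) \<open>(x,K) \<in> p\<close> by (auto simp: fine_def)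
          ultimately show "y \<in> U" using r(2) xK by blast
        qed
        show "\<Union>(snd ` p1) \<in> sets lebesgue"
        proof (rule sets.finite_Union)
          show "finite (snd ` p1)" using finp1 by simp
          show "snd ` p1 \<subseteq> sets lebesgue"
          proof
            fix K assume "K \<in> snd ` p1"
            then obtain x where "(x,K) \<in> p" unfolding p1_def by auto
            then obtain u v where "K = {u..v}" using tag_interval[OF p(1)] by blast
            then show "K \<in> sets lebesgue" by simp
          qed
        qed
        show "U \<in> lmeasurable" using U(3) .
      qed
      also have "\<dots> < \<delta>" using U(4) .
      finally have c3: "(\<Sum>k<n. rr k - l k) < \<delta>" .
      have "(\<Sum>k<n. \<bar>f (rr k) - f (l k)\<bar>) < \<eta>" using acd[OF c1 c2 c3] .
      moreover have "(\<Sum>k<n. \<bar>f (rr k) - f (l k)\<bar>) = (\<Sum>(x,K)\<in>p1. \<bar>f (Sup K) - f (Inf K)\<bar>)"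
        using sumeq[of "\<lambda>z. \<bar>f (Sup (snd z)) - f (Inf (snd z))\<bar>"] unfolding l_def rr_def
        by (simp add: case_prod_beta)
      ultimately show ?thesis by simp
    qed
    finally have "g b - g a < \<eta>" by simp
    then show ?thesis unfolding g_def by (simp add: algebra_simps)
  qed
  show ?thesis
  proof (rule ccontr)
    assume "\<not> f b \<le> f a"
    then have pos: "f b - f a > 0" by simp
    define e where "e = (f b - f a) / 2"
    have "f b - f a \<le> e / 2 + (e / (2 * (b - a + 1))) * (b - a)"
      using key[of "e/2" "e / (2 * (b - a + 1))"] pos ab unfolding e_def by auto
    also have "(e / (2 * (b - a + 1))) * (b - a) \<le> e / 2"
      using pos ab unfolding e_def by (auto simp: field_simps)
    finally show False unfolding e_def using pos by simp
  qed
qed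


lemma acD:
  assumes "abs_cont_on_interval f a b" "e > 0"
  obtains \<delta> where "\<delta> > 0" "\<And>(n::nat) l r. (\<forall>k<n. a \<le> l k \<and> l k \<le> r k \<and> r k \<le> b) \<Longrightarrow>
          (\<forall>k<n. \<forall>m<n. k \<noteq> m \<longrightarrow> r k \<le> l m \<or> r m \<le> l k) \<Longrightarrow> (\<Sum>k<n. r k - l k) < \<delta> \<Longrightarrow>
          (\<Sum>k<n. \<bar>f (r k) - f (l k)\<bar>) < e"
proof -
  from assms(1)[unfolded abs_cont_on_interval_def, rule_format, OF assms(2)]
  obtain \<delta> where d: "\<delta> > 0" and H: "\<forall>(n::nat) l r. (\<forall>k<n. a \<le> l k \<and> l k \<le> r k \<and> r k \<le> b) \<and>
          (\<forall>k<n. \<forall>m<n. k \<noteq> m \<longrightarrow> r k \<le> l m \<or> r m \<le> l k) \<and> (\<Sum>k<n. r k - l k) < \<delta> \<longrightarrow>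
          (\<Sum>k<n. \<bar>f (r k) - f (l k)\<bar>) < e" by (elim exE conjE)
  show ?thesis
    by (rule that[OF d]) (rule H[rule_format], intro conjI)
qed

lemma acI:
  assumes "\<And>e. e > 0 \<Longrightarrow> \<exists>\<delta>>0. \<forall>(n::nat) l r. (\<forall>k<n. a \<le> l k \<and> l k \<le> r k \<and> r k \<le> b) \<longrightarrow>
          (\<forall>k<n. \<forall>m<n. k \<noteq> m \<longrightarrow> r k \<le> l m \<or> r m \<le> l k) \<longrightarrow> (\<Sum>k<n. r k - l k) < \<delta> \<longrightarrow>
          (\<Sum>k<n. \<bar>f (r k) - f (l k)\<bar>) < e"
  shows "abs_cont_on_interval f a b"
  unfolding abs_cont_on_interval_def
proof (intro allI impI)
  fix e :: real assume "e > 0"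
  from assms[OF this] obtain \<delta> where d: "\<delta> > 0" and H: "\<forall>(n::nat) l r. (\<forall>k<n. a \<le> l k \<and> l k \<le> r k \<and> r k \<le> b) \<longrightarrow>
          (\<forall>k<n. \<forall>m<n. k \<noteq> m \<longrightarrow> r k \<le> l m \<or> r m \<le> l k) \<longrightarrow> (\<Sum>k<n. r k - l k) < \<delta> \<longrightarrow>
          (\<Sum>k<n. \<bar>f (r k) - f (l k)\<bar>) < e" by (elim exE conjE)
  show "\<exists>\<delta>>0. \<forall>(n::nat) l r. (\<forall>k<n. a \<le> l k \<and> l k \<le> r k \<and> r k \<le> b) \<and>
          (\<forall>k<n. \<forall>m<n. k \<noteq> m \<longrightarrow> r k \<le> l m \<or> r m \<le> l k) \<and> (\<Sum>k<n. r k - l k) < \<delta> \<longrightarrow>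
          (\<Sum>k<n. \<bar>f (r k) - f (l k)\<bar>) < e"
  proof (intro exI[of _ \<delta>] conjI allI impI d)
    fix n l r assume h: "(\<forall>k<(n::nat). a \<le> l k \<and> l k \<le> r k \<and> r k \<le> b) \<and>
          (\<forall>k<n. \<forall>m<n. k \<noteq> m \<longrightarrow> r k \<le> l m \<or> r m \<le> l k) \<and> (\<Sum>k<n. r k - l k) < \<delta>"
    show "(\<Sum>k<n. \<bar>f (r k) - f (l k)\<bar>) < e"
      using h by (elim conjE) (rule H[THEN spec[of _ n], THEN spec[of _ l], THEN spec[of _ r], THEN mp, THEN mp, THEN mp]; assumption)
  qed
qed


lemma ac_dom:
  assumes f: "abs_cont_on_interval f a b" and g: "abs_cont_on_interval g a b"
    and A: "A \<ge> 0" and B: "B \<ge> 0" and C: "C \<ge> 0"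
    and dom: "\<And>s t. a \<le> s \<Longrightarrow> s \<le> t \<Longrightarrow> t \<le> b \<Longrightarrow> \<bar>h t - h s\<bar> \<le> A * \<bar>f t - f s\<bar> + B * \<bar>g t - g s\<bar> + C * (t - s)"
  shows "abs_cont_on_interval h a b"
proof (rule acI)
  fix e :: real assume e: "e > 0"
  have e1: "e / (3 * (A + 1)) > 0" using e A by simp
  have e2: "e / (3 * (B + 1)) > 0" using e B by simp
  have e3: "e / (3 * (C + 1)) > 0" using e C by simp
  obtain d1 where d1: "d1 > 0" "\<And>(n::nat) l r. (\<forall>k<n. a \<le> l k \<and> l k \<le> r k \<and> r k \<le> b) \<Longrightarrow>
          (\<forall>k<n. \<forall>m<n. k \<noteq> m \<longrightarrow> r k \<le> l m \<or> r m \<le> l k) \<Longrightarrow> (\<Sum>k<n. r k - l k) < d1 \<Longrightarrow>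
          (\<Sum>k<n. \<bar>f (r k) - f (l k)\<bar>) < e / (3 * (A + 1))"
    using acD[OF f e1] by blast
  obtain d2 where d2: "d2 > 0" "\<And>(n::nat) l r. (\<forall>k<n. a \<le> l k \<and> l k \<le> r k \<and> r k \<le> b) \<Longrightarrow>
          (\<forall>k<n. \<forall>m<n. k \<noteq> m \<longrightarrow> r k \<le> l m \<or> r m \<le> l k) \<Longrightarrow> (\<Sum>k<n. r k - l k) < d2 \<Longrightarrow>
          (\<Sum>k<n. \<bar>g (r k) - g (l k)\<bar>) < e / (3 * (B + 1))"
    using acD[OF g e2] by blast
  define d where "d = min (min d1 d2) (e / (3 * (C + 1)))"
  have dpos: "d > 0" using d1 d2 e3 unfolding d_def by simp
  show "\<exists>\<delta>>0. \<forall>(n::nat) l r. (\<forall>k<n. a \<le> l k \<and> l k \<le> r k \<and> r k \<le> b) \<longrightarrow>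
          (\<forall>k<n. \<forall>m<n. k \<noteq> m \<longrightarrow> r k \<le> l m \<or> r m \<le> l k) \<longrightarrow> (\<Sum>k<n. r k - l k) < \<delta> \<longrightarrow>
          (\<Sum>k<n. \<bar>h (r k) - h (l k)\<bar>) < e"
  proof (intro exI[of _ d] conjI allI impI dpos)
    fix n :: nat and l r
    assume h1: "\<forall>k<n. a \<le> l k \<and> l k \<le> r k \<and> r k \<le> b"
      and h2: "\<forall>k<n. \<forall>m<n. k \<noteq> m \<longrightarrow> r k \<le> l m \<or> r m \<le> l k"
      and h3: "(\<Sum>k<n. r k - l k) < d"
    have S1: "(\<Sum>k<n. \<bar>f (r k) - f (l k)\<bar>) < e / (3 * (A + 1))"
      using d1(2)[OF h1 h2] h3 unfolding d_def by linarith
    have S2: "(\<Sum>k<n. \<bar>g (r k) - g (l k)\<bar>) < e / (3 * (B + 1))"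
      using d2(2)[OF h1 h2] h3 unfolding d_def by linarith
    have S3: "(\<Sum>k<n. r k - l k) < e / (3 * (C + 1))" using h3 unfolding d_def by linarith
    have "(\<Sum>k<n. \<bar>h (r k) - h (l k)\<bar>) \<le> (\<Sum>k<n. A * \<bar>f (r k) - f (l k)\<bar> + B * \<bar>g (r k) - g (l k)\<bar> + C * (r k - l k))"
      by (intro sum_mono dom) (use h1 in auto)
    also have "\<dots> = A * (\<Sum>k<n. \<bar>f (r k) - f (l k)\<bar>) + B * (\<Sum>k<n. \<bar>g (r k) - g (l k)\<bar>) + C * (\<Sum>k<n. r k - l k)"
      by (simp add: sum.distrib sum_distrib_left)
    also have "\<dots> \<le> A * (e / (3 * (A + 1))) + B * (e / (3 * (B + 1))) + C * (e / (3 * (C + 1)))"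
      using S1 S2 S3 A B C by (intro add_mono mult_left_mono) auto
    also have "\<dots> < e"
    proof -
      have "A * (e / (3 * (A + 1))) < e / 3" using A e by (simp add: field_simps)
      moreover have "B * (e / (3 * (B + 1))) < e / 3" using B e by (simp add: field_simps)
      moreover have "C * (e / (3 * (C + 1))) < e / 3" using C e by (simp add: field_simps)
      ultimately show ?thesis by linarith
    qed
    finally show "(\<Sum>k<n. \<bar>h (r k) - h (l k)\<bar>) < e" .
  qed
qed

lemma ac_sub:
  assumes "abs_cont_on_interval f a b" "a \<le> c" "d \<le> b"
  shows "abs_cont_on_interval f c d"
proof (rule acI)
  fix e :: real assume e: "e > 0"
  obtain \<delta> where d: "\<delta> > 0" "\<And>(n::nat) l r. (\<forall>k<n. a \<le> l k \<and> l k \<le> r k \<and> r k \<le> b) \<Longrightarrow>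
          (\<forall>k<n. \<forall>m<n. k \<noteq> m \<longrightarrow> r k \<le> l m \<or> r m \<le> l k) \<Longrightarrow> (\<Sum>k<n. r k - l k) < \<delta> \<Longrightarrow>
          (\<Sum>k<n. \<bar>f (r k) - f (l k)\<bar>) < e"
    using acD[OF assms(1) e] by blast
  show "\<exists>\<delta>>0. \<forall>(n::nat) l r. (\<forall>k<n. c \<le> l k \<and> l k \<le> r k \<and> r k \<le> d) \<longrightarrow>
          (\<forall>k<n. \<forall>m<n. k \<noteq> m \<longrightarrow> r k \<le> l m \<or> r m \<le> l k) \<longrightarrow> (\<Sum>k<n. r k - l k) < \<delta> \<longrightarrow>
          (\<Sum>k<n. \<bar>f (r k) - f (l k)\<bar>) < e"
  proof (intro exI[of _ \<delta>] conjI allI impI d(1))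
    fix n :: nat and l r
    assume h1: "\<forall>k<n. c \<le> l k \<and> l k \<le> r k \<and> r k \<le> d"
      and h2: "\<forall>k<n. \<forall>m<n. k \<noteq> m \<longrightarrow> r k \<le> l m \<or> r m \<le> l k"
      and h3: "(\<Sum>k<n. r k - l k) < \<delta>"
    have h1': "\<forall>k<n. a \<le> l k \<and> l k \<le> r k \<and> r k \<le> b" using h1 assms(2,3) by force
    show "(\<Sum>k<n. \<bar>f (r k) - f (l k)\<bar>) < e" using d(2)[OF h1' h2 h3] .
  qed
qed

lemma ac_zero: "abs_cont_on_interval (\<lambda>t. 0) a b"
  unfolding abs_cont_on_interval_def by (auto intro!: exI[of _ 1])

lemma ac_const: "abs_cont_on_interval (\<lambda>t. c) a b"
  by (rule ac_dom[OF ac_zero ac_zero order_refl order_refl order_refl]) auto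

lemma ac_lipschitz:
  assumes "K \<ge> 0" "\<And>s t. a \<le> s \<Longrightarrow> s \<le> t \<Longrightarrow> t \<le> b \<Longrightarrow> \<bar>f t - f s\<bar> \<le> K * (t - s)"
  shows "abs_cont_on_interval f a b"
  by (rule ac_dom[OF ac_zero ac_zero order_refl order_refl assms(1)]) (use assms(2) in auto)

lemma ac_add:
  assumes "abs_cont_on_interval f a b" "abs_cont_on_interval g a b"
  shows "abs_cont_on_interval (\<lambda>t. f t + g t) a b"
  by (rule ac_dom[OF assms zero_le_one zero_le_one order_refl]) auto

lemma ac_scale:
  assumes "abs_cont_on_interval f a b"
  shows "abs_cont_on_interval (\<lambda>t. c * f t) a b"
  by (rule ac_dom[OF assms assms abs_ge_zero[of c] order_refl order_refl])
     (simp add: abs_mult flip: right_diff_distrib)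

lemma ac_diff:
  assumes "abs_cont_on_interval f a b" "abs_cont_on_interval g a b"
  shows "abs_cont_on_interval (\<lambda>t. f t - g t) a b"
  by (rule ac_dom[OF assms zero_le_one zero_le_one order_refl]) auto

lemma ac_sum:
  assumes "finite S" "\<And>i. i \<in> S \<Longrightarrow> abs_cont_on_interval (f i) a b"
  shows "abs_cont_on_interval (\<lambda>t. \<Sum>i\<in>S. f i t) a b"
  using assms
proof (induction S rule: finite_induct)
  case empty
  then show ?case using ac_const[of 0] by simp
next
  case (insert x F)
  then show ?case using ac_add[of "f x" a b "\<lambda>t. \<Sum>i\<in>F. f i t"] by simp
qed

lemma ac_continuous:
  assumes "abs_cont_on_interval f a b"
  shows "continuous_on {a..b} f"
  unfolding continuous_on_iff
proof (intro ballI allI impI)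
  fix x e assume x: "x \<in> {a..b}" and e: "(e::real) > 0"
  obtain d where d: "d > 0" "\<And>(n::nat) l r. (\<forall>k<n. a \<le> l k \<and> l k \<le> r k \<and> r k \<le> b) \<Longrightarrow>
          (\<forall>k<n. \<forall>m<n. k \<noteq> m \<longrightarrow> r k \<le> l m \<or> r m \<le> l k) \<Longrightarrow> (\<Sum>k<n. r k - l k) < d \<Longrightarrow>
          (\<Sum>k<n. \<bar>f (r k) - f (l k)\<bar>) < e"
    using acD[OF assms e] by blast
  show "\<exists>d>0. \<forall>x'\<in>{a..b}. dist x' x < d \<longrightarrow> dist (f x') (f x) < e"
  proof (intro exI[of _ d] conjI ballI impI)
    show "d > 0" using d by simp
    fix y assume y: "y \<in> {a..b}" "dist y x < d"
    define l where "l = (\<lambda>k::nat. min x y)"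
    define r where "r = (\<lambda>k::nat. max x y)"
    have c1: "\<forall>k<Suc 0. a \<le> l k \<and> l k \<le> r k \<and> r k \<le> b" using x y unfolding l_def r_def by auto
    have c2: "\<forall>k<Suc 0. \<forall>m<Suc 0. k \<noteq> m \<longrightarrow> r k \<le> l m \<or> r m \<le> l k" by auto
    have c3: "(\<Sum>k<Suc 0. r k - l k) < d" using y unfolding l_def r_def by (auto simp: dist_real_def)
    have "(\<Sum>k<Suc 0. \<bar>f (r k) - f (l k)\<bar>) < e" using d(2)[OF c1 c2 c3] .
    then show "dist (f y) (f x) < e" unfolding l_def r_def
      by (cases "x \<le> y") (auto simp: dist_real_def min_def max_def abs_minus_commute)
  qed
qed

lemma ac_bounded:
  assumes "abs_cont_on_interval f a b"
  obtains B where "B > 0" "\<And>t. t \<in> {a..b} \<Longrightarrow> \<bar>f t\<bar> \<le> B"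
proof -
  have "compact (f ` {a..b})" using ac_continuous[OF assms] compact_continuous_image by blast
  then have "bounded (f ` {a..b})" by (rule compact_imp_bounded)
  then obtain B where "B > 0" "\<forall>y\<in>f ` {a..b}. norm y \<le> B"
    unfolding bounded_pos by blast
  then show ?thesis using that by auto
qed

lemma ac_mult:
  assumes f: "abs_cont_on_interval f a b" and g: "abs_cont_on_interval g a b"
  shows "abs_cont_on_interval (\<lambda>t. f t * g t) a b"
proof -
  obtain F where F: "F > 0" "\<And>t. t \<in> {a..b} \<Longrightarrow> \<bar>f t\<bar> \<le> F" using ac_bounded[OF f] by blast
  obtain G where G: "G > 0" "\<And>t. t \<in> {a..b} \<Longrightarrow> \<bar>g t\<bar> \<le> G" using ac_bounded[OF g] by blast
  show ?thesis
  proof (rule ac_dom[OF f g _ _ order_refl, of G F])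
    show "G \<ge> 0" "F \<ge> 0" using F G by auto
    fix s t assume st: "a \<le> s" "s \<le> t" "t \<le> b"
    have eq: "f t * g t - f s * g s = g t * (f t - f s) + f s * (g t - g s)"
      by (simp add: algebra_simps)
    have "\<bar>g t * (f t - f s)\<bar> \<le> G * \<bar>f t - f s\<bar>"
      using G(2)[of t] st by (simp add: abs_mult mult_right_mono)
    moreover have "\<bar>f s * (g t - g s)\<bar> \<le> F * \<bar>g t - g s\<bar>"
      using F(2)[of s] st by (simp add: abs_mult mult_right_mono)
    ultimately show "\<bar>f t * g t - f s * g s\<bar> \<le> G * \<bar>f t - f s\<bar> + F * \<bar>g t - g s\<bar> + 0 * (t - s)"
      unfolding eq by linarith
  qed
qed

lemma ac_exp: "abs_cont_on_interval (\<lambda>t. exp (c * t)) a b"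
proof (rule ac_lipschitz[of "\<bar>c\<bar> * exp (\<bar>c\<bar> * (\<bar>a\<bar> + \<bar>b\<bar>))"])
  show "\<bar>c\<bar> * exp (\<bar>c\<bar> * (\<bar>a\<bar> + \<bar>b\<bar>)) \<ge> 0" by simp
  fix s t assume st: "a \<le> s" "s \<le> t" "t \<le> b"
  show "\<bar>exp (c * t) - exp (c * s)\<bar> \<le> \<bar>c\<bar> * exp (\<bar>c\<bar> * (\<bar>a\<bar> + \<bar>b\<bar>)) * (t - s)"
  proof (cases "s = t")
    case False
    then have lt: "s < t" using st by simp
    have "\<And>u. s \<le> u \<Longrightarrow> u \<le> t \<Longrightarrow> ((\<lambda>t. exp (c * t)) has_real_derivative (c * exp (c * u))) (at u)"
      by (auto intro!: derivative_eq_intros)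
    from MVT2[OF lt this] obtain z where z: "s < z" "z < t" "exp (c * t) - exp (c * s) = (t - s) * (c * exp (c * z))"
      by blast
    have "c * z \<le> \<bar>c\<bar> * (\<bar>a\<bar> + \<bar>b\<bar>)"
    proof -
      have "\<bar>z\<bar> \<le> \<bar>a\<bar> + \<bar>b\<bar>" using z st by auto
      then have "\<bar>c\<bar> * \<bar>z\<bar> \<le> \<bar>c\<bar> * (\<bar>a\<bar> + \<bar>b\<bar>)" by (simp add: mult_left_mono)
      moreover have "c * z \<le> \<bar>c\<bar> * \<bar>z\<bar>" by (metis abs_ge_self abs_mult)
      ultimately show ?thesis by linarith
    qed
    then have "exp (c * z) \<le> exp (\<bar>c\<bar> * (\<bar>a\<bar> + \<bar>b\<bar>))" by simp
    then have "\<bar>c * exp (c * z)\<bar> \<le> \<bar>c\<bar> * exp (\<bar>c\<bar> * (\<bar>a\<bar> + \<bar>b\<bar>))"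
      by (simp add: abs_mult mult_left_mono)
    then show ?thesis unfolding z(3) using lt by (simp add: abs_mult mult.commute mult_left_mono)
  qed simp
qed


definition mv :: "nat \<times> nat \<Rightarrow> nat \<times> nat \<Rightarrow> real \<Rightarrow> nat \<times> nat \<Rightarrow> real" where
  "mv s dd r p = r * ((if p = dd then 1 else 0) - (if p = s then 1 else 0))"

lemma finite_idx[simp]: "finite (idx I)"
proof -
  have "idx I \<subseteq> {0..I} \<times> {0..I}" unfolding idx_def by auto
  then show ?thesis by (rule finite_subset) simp
qed

lemma idx_iff[simp]: "(i, j) \<in> idx I \<longleftrightarrow> i \<le> j \<and> j \<le> I"
  unfolding idx_def by simp

lemma mv_eq: "mv s dd r p = (if dd = p then r else 0) - (if s = p then r else 0)"
  unfolding mv_def by auto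

lemma sum_mv_split:
  "(\<Sum>q\<in>F. mv q (D q) (r q) p) = (\<Sum>q\<in>F. if D q = p then r q else 0) - (\<Sum>q\<in>F. if q = p then r q else 0)"
  by (simp add: mv_eq sum_subtractf)

lemma sum_if_single:
  assumes "finite F" "\<And>q. q \<in> F \<Longrightarrow> P q \<longleftrightarrow> q = c"
  shows "(\<Sum>q\<in>F. if P q then r q else 0) = (if c \<in> F then r c else 0)"
proof -
  have "(\<Sum>q\<in>F. if P q then r q else 0) = (\<Sum>q\<in>F. if q = c then r q else 0)"
    using assms(2) by (intro sum.cong) auto
  also have "\<dots> = (if c \<in> F then r c else 0)" using assms(1) by (simp add: sum.delta')
  finally show ?thesis .
qed

lemma sum_if_none:
  assumes "\<And>q. q \<in> F \<Longrightarrow> \<not> P q"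
  shows "(\<Sum>q\<in>F. if P q then r q else 0) = 0"
  using assms by (intro sum.neutral) auto

lemma sum_mv_phi:
  assumes "finite S" "s \<in> S" "dd \<in> S"
  shows "(\<Sum>p\<in>S. phi p * mv s dd r p) = r * (phi dd - phi s)"
proof -
  have "\<And>p. phi p * mv s dd r p = (if dd = p then r * phi dd else 0) - (if s = p then r * phi s else 0)"
    by (auto simp: mv_eq)
  then have "(\<Sum>p\<in>S. phi p * mv s dd r p) = (\<Sum>p\<in>S. if dd = p then r * phi dd else 0) - (\<Sum>p\<in>S. if s = p then r * phi s else 0)"
    by (simp add: sum_subtractf)
  also have "\<dots> = r * phi dd - r * phi s" using assms by (simp add: sum.delta)
  finally show ?thesis by (simp add: algebra_simps)
qed

definition depF :: "nat \<Rightarrow> (nat \<times> nat) set" where "depF I = {p \<in> idx I. 1 \<le> fst p}"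
definition updF :: "nat \<Rightarrow> (nat \<times> nat) set" where "updF I = {p \<in> idx I. fst p < snd p}"
definition rhoF :: "nat \<Rightarrow> (nat \<times> nat) set" where "rhoF I = {p \<in> idx I. 1 \<le> snd p \<and> p \<noteq> (I, I)}"

lemma finite_F[simp]: "finite (depF I)" "finite (updF I)" "finite (rhoF I)"
  unfolding depF_def updF_def rhoF_def by auto

lemma dep_point:
  assumes "i \<le> j" "j \<le> I"
  shows "(\<Sum>q\<in>depF I. mv q (fst q - 1, snd q) (r q) (i, j))
       = (if i + 1 \<le> j then r (i + 1, j) else 0) - (if 1 \<le> i then r (i, j) else 0)"
proof -
  have A: "(\<Sum>q\<in>depF I. if (fst q - 1, snd q) = (i, j) then r q else 0) = (if (i+1, j) \<in> depF I then r (i+1,j) else 0)"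
    by (rule sum_if_single) (auto simp: depF_def)
  have B: "(\<Sum>q\<in>depF I. if q = (i, j) then r q else 0) = (if (i, j) \<in> depF I then r (i,j) else 0)"
    by (simp add: sum.delta')
  show ?thesis unfolding sum_mv_split A B using assms by (auto simp: depF_def)
qed

lemma upd_point:
  assumes "i \<le> j" "j \<le> I"
  shows "(\<Sum>q\<in>updF I. mv q (fst q, fst q) (r q) (i, j))
       = (if i = j then (\<Sum>k\<in>{i<..I}. r (i, k)) else 0) - (if i < j then r (i, j) else 0)"
proof -
  have A: "(\<Sum>q\<in>updF I. if (fst q, fst q) = (i, j) then r q else 0) = (if i = j then (\<Sum>k\<in>{i<..I}. r (i, k)) else 0)"
  proof (cases "i = j")
    case True
    have "(\<Sum>q\<in>updF I. if (fst q, fst q) = (i, j) then r q else 0) = (\<Sum>q\<in>{i} \<times> {i<..I}. r q)"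
    proof -
      have "(\<Sum>q\<in>updF I. if (fst q, fst q) = (i, j) then r q else 0) = (\<Sum>q\<in>{q\<in>updF I. (fst q, fst q) = (i, j)}. r q)"
        by (simp add: sum.inter_filter)
      also have "{q\<in>updF I. (fst q, fst q) = (i, j)} = {i} \<times> {i<..I}"
        using True by (auto simp: updF_def)
      finally show ?thesis .
    qed
    also have "\<dots> = (\<Sum>k\<in>{i<..I}. r (i, k))" 
    proof -
      have "{i} \<times> {i<..I} = (\<lambda>k. (i,k)) ` {i<..I}" by auto
      then show ?thesis by (simp add: sum.reindex inj_on_def)
    qed
    finally show ?thesis using True by simp
  next
    case False
    then show ?thesis by (simp add: sum_if_none)
  qed
  have B: "(\<Sum>q\<in>updF I. if q = (i, j) then r q else 0) = (if (i, j) \<in> updF I then r (i,j) else 0)"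
    by (simp add: sum.delta')
  show ?thesis unfolding sum_mv_split A B using assms by (auto simp: updF_def)
qed

lemma rho_point:
  assumes "i \<le> j" "j \<le> I" "2 \<le> I"
  shows "(\<Sum>q\<in>rhoF I. mv q (fst q + 1, min (snd q + 1) I) (r q) (i, j))
       = (if 1 \<le> i \<and> 2 \<le> j then r (i - 1, j - 1) else 0) + (if 1 \<le> i \<and> j = I then r (i - 1, I) else 0)
         - (if 1 \<le> j \<and> (i, j) \<noteq> (I, I) then r (i, j) else 0)"
proof -
  have A: "(\<Sum>q\<in>rhoF I. if (fst q + 1, min (snd q + 1) I) = (i, j) then r q else 0)
      = (if 1 \<le> i \<and> 2 \<le> j then r (i - 1, j - 1) else 0) + (if 1 \<le> i \<and> j = I then r (i - 1, I) else 0)"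
  proof (cases "1 \<le> i \<and> j = I")
    case True
    have "(\<Sum>q\<in>rhoF I. if (fst q + 1, min (snd q + 1) I) = (i, j) then r q else 0) = (\<Sum>q\<in>{(i-1, I-1), (i-1, I)}. r q)"
    proof -
      have "(\<Sum>q\<in>rhoF I. if (fst q + 1, min (snd q + 1) I) = (i, j) then r q else 0)
          = (\<Sum>q\<in>{q\<in>rhoF I. (fst q + 1, min (snd q + 1) I) = (i, j)}. r q)"
        by (simp add: sum.inter_filter)
      also have "{q\<in>rhoF I. (fst q + 1, min (snd q + 1) I) = (i, j)} = {(i-1, I-1), (i-1, I)}"
        using True assms by (auto simp: rhoF_def min_def split: if_splits)
      finally show ?thesis .
    qed
    also have "\<dots> = r (i-1, I-1) + r (i-1, I)" using assms by simp
    finally show ?thesis using True assms by simp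
  next
    case False
    show ?thesis
    proof (cases "1 \<le> i \<and> 2 \<le> j")
      case True
      have "(\<Sum>q\<in>rhoF I. if (fst q + 1, min (snd q + 1) I) = (i, j) then r q else 0) = (if (i-1, j-1) \<in> rhoF I then r (i-1, j-1) else 0)"
        by (rule sum_if_single) (use True False assms in \<open>auto simp: rhoF_def min_def split: if_splits\<close>)
      then show ?thesis using True False assms by (auto simp: rhoF_def)
    next
      case False2: False
      have "(\<Sum>q\<in>rhoF I. if (fst q + 1, min (snd q + 1) I) = (i, j) then r q else 0) = 0"
        by (rule sum_if_none) (use False False2 assms in \<open>auto simp: rhoF_def min_def split: if_splits\<close>)
      then show ?thesis using False False2 by auto
    qed
  qed
  have B: "(\<Sum>q\<in>rhoF I. if q = (i, j) then r q else 0) = (if (i, j) \<in> rhoF I then r (i,j) else 0)"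
    by (simp add: sum.delta')
  show ?thesis unfolding sum_mv_split A B using assms by (auto simp: rhoF_def)
qed

lemma G_point:
  assumes "i \<le> j" "j \<le> I" "2 \<le> I"
  shows "(\<Sum>k\<in>{1..I-1}. mv (k, k) (k+1, k+1) (g k) (i, j))
       = (if i = j \<and> 2 \<le> i then g (i - 1) else 0) - (if i = j \<and> 1 \<le> i \<and> i \<le> I - 1 then g i else 0)"
proof -
  have A: "(\<Sum>k\<in>{1..I-1}. if (k+1, k+1) = (i, j) then g k else 0) = (if i = j \<and> 2 \<le> i then g (i - 1) else 0)"
  proof (cases "i = j \<and> 2 \<le> i")
    case True
    have "(\<Sum>k\<in>{1..I-1}. if (k+1, k+1) = (i, j) then g k else 0) = (if i - 1 \<in> {1..I-1} then g (i-1) else 0)"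
      by (rule sum_if_single) (use True in auto)
    then show ?thesis using True assms by auto
  next
    case False
    have "(\<Sum>k\<in>{1..I-1}. if (k+1, k+1) = (i, j) then g k else 0) = 0"
      by (rule sum_if_none) (use False in auto)
    then show ?thesis using False by auto
  qed
  have B: "(\<Sum>k\<in>{1..I-1}. if (k, k) = (i, j) then g k else 0) = (if i = j \<and> 1 \<le> i \<and> i \<le> I - 1 then g i else 0)"
  proof (cases "i = j \<and> 1 \<le> i \<and> i \<le> I - 1")
    case True
    have "(\<Sum>k\<in>{1..I-1}. if (k, k) = (i, j) then g k else 0) = (if i \<in> {1..I-1} then g i else 0)"
      by (rule sum_if_single) (use True in auto)
    then show ?thesis using True assms by auto
  next
    case False
    have "(\<Sum>k\<in>{1..I-1}. if (k, k) = (i, j) then g k else 0) = 0"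
      by (rule sum_if_none) (use False in auto)
    then show ?thesis using False by auto
  qed
  show ?thesis unfolding mv_eq sum_subtractf A[symmetric] B[symmetric] by simp
qed


definition flows :: "real \<Rightarrow> nat \<Rightarrow> nat \<Rightarrow> (nat \<Rightarrow> nat \<Rightarrow> real) \<Rightarrow> nat \<times> nat \<Rightarrow> real" where
  "flows lam d I y p =
    (\<Sum>q\<in>depF I. mv q (fst q - 1, snd q) (y (fst q) (snd q)) p)
  + (\<Sum>q\<in>updF I. mv q (fst q, fst q) (lam * real d * y (fst q) (snd q)) p)
  + mv (0,0) (1,1) (lam - Rf lam d I 0 y) p
  + (\<Sum>q\<in>rhoF I. mv q (fst q + 1, min (snd q + 1) I) (rho lam d I (snd q - 1) (fst q) (snd q) y) p)
  + (\<Sum>k\<in>{1..I-1}. mv (k,k) (k+1,k+1) (Gf lam d I k y) p)"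

lemma xrow_split: "i \<le> I \<Longrightarrow> xrow I y i = y i i + (\<Sum>k\<in>{i<..I}. y i k)"
proof -
  assume "i \<le> I"
  then have "{i..I} = insert i {i<..I}" by auto
  then show ?thesis unfolding xrow_def by simp
qed

lemma drift_00: "drift lam d I y 0 0 = lam * real d * (xrow I y 0 - y 0 0) - lam + Rf lam d I 0 y"
  by (simp add: drift_def)

lemma drift_lt: "i < j \<Longrightarrow> drift lam d I y i j =
       y (i + 1) j - (if i > 0 then y i j else 0) - lam * real d * y i j
       - rho lam d I (j - 1) i j y
       + (if i > 0 then rho lam d I (j - 2) (i - 1) (j - 1) y else 0)
       + (if j = I \<and> i > 0 then rho lam d I (I - 1) (i - 1) I y else 0)"
  by (simp add: drift_def)

lemma drift_11: "drift lam d I y 1 1 =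
       - y 1 1 + lam * real d * (xrow I y 1 - y 1 1) + lam - Rf lam d I 0 y
       - rho lam d I 0 1 1 y - Gf lam d I 1 y"
  by (simp add: drift_def)

lemma drift_ii: "2 \<le> i \<Longrightarrow> i \<le> I - 1 \<Longrightarrow> drift lam d I y i i =
       - y i i + lam * real d * (xrow I y i - y i i)
       - rho lam d I (i - 1) i i y + rho lam d I (i - 2) (i - 1) (i - 1) y
       + Gf lam d I (i - 1) y - Gf lam d I i y"
  by (simp add: drift_def)

lemma drift_II: "2 \<le> I \<Longrightarrow> drift lam d I y I I =
       - y I I + rho lam d I (I - 2) (I - 1) (I - 1) y + Gf lam d I (I - 1) y
       + rho lam d I (I - 1) (I - 1) I y"
proof -
  assume "2 \<le> I"
  then have "\<not> I \<le> I - Suc 0" "I \<noteq> 0" "I \<noteq> 1" by arith+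
  then show ?thesis by (simp add: drift_def)
qed

lemma test_a:
  assumes I: "2 \<le> I"
  shows "drift lam d I y 0 0 = flows lam d I y (0, 0)"
proof -
  have D: "(\<Sum>q\<in>depF I. mv q (fst q - 1, snd q) (y (fst q) (snd q)) (0, 0)) = 0"
    using dep_point[of 0 0 I "\<lambda>q. y (fst q) (snd q)"] by simp
  have U: "(\<Sum>q\<in>updF I. mv q (fst q, fst q) (lam * real d * y (fst q) (snd q)) (0, 0))
       = (\<Sum>k\<in>{0<..I}. lam * real d * y 0 k)"
    using upd_point[of 0 0 I "\<lambda>q. lam * real d * y (fst q) (snd q)"] by simp
  have Rh: "(\<Sum>q\<in>rhoF I. mv q (fst q + 1, min (snd q + 1) I) (rho lam d I (snd q - 1) (fst q) (snd q) y) (0, 0)) = 0"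
    using rho_point[of 0 0 I "\<lambda>q. rho lam d I (snd q - 1) (fst q) (snd q) y"] I by simp
  have G: "(\<Sum>k\<in>{1..I-1}. mv (k,k) (k+1,k+1) (Gf lam d I k y) (0, 0)) = 0"
    using G_point[of 0 0 I] I by simp
  have B: "mv (0,0) (1,1) (lam - Rf lam d I 0 y) (0, 0) = - (lam - Rf lam d I 0 y)"
    by (auto simp: mv_eq)
  have X: "xrow I y 0 - y 0 0 = (\<Sum>k\<in>{0<..I}. y 0 k)" using xrow_split[of 0 I y] by simp
  show ?thesis unfolding flows_def D U Rh G B drift_00 X by (simp add: sum_distrib_left)
qed


lemma test_0j:
  assumes I: "2 \<le> I" and j: "1 \<le> j" "j \<le> I"
  shows "drift lam d I y 0 j = flows lam d I y (0, j)"
proof -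
  have D: "(\<Sum>q\<in>depF I. mv q (fst q - 1, snd q) (y (fst q) (snd q)) (0, j)) = y 1 j"
    using dep_point[of 0 j I "\<lambda>q. y (fst q) (snd q)"] j by simp
  have U: "(\<Sum>q\<in>updF I. mv q (fst q, fst q) (lam * real d * y (fst q) (snd q)) (0, j)) = - (lam * real d * y 0 j)"
    using upd_point[of 0 j I "\<lambda>q. lam * real d * y (fst q) (snd q)"] j by simp
  have Rh: "(\<Sum>q\<in>rhoF I. mv q (fst q + 1, min (snd q + 1) I) (rho lam d I (snd q - 1) (fst q) (snd q) y) (0, j))
     = - rho lam d I (j - 1) 0 j y"
    using rho_point[of 0 j I "\<lambda>q. rho lam d I (snd q - 1) (fst q) (snd q) y"] I j by simp
  have G: "(\<Sum>k\<in>{1..I-1}. mv (k,k) (k+1,k+1) (Gf lam d I k y) (0, j)) = 0"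
    using G_point[of 0 j I] I j by simp
  have B: "mv (0,0) (1,1) (lam - Rf lam d I 0 y) (0, j) = 0"
    using j by (auto simp: mv_eq)
  have lt: "0 < j" using j by simp
  show ?thesis unfolding flows_def D U Rh G B drift_lt[OF lt] by simp
qed

lemma test_ij:
  assumes I: "2 \<le> I" and ij: "1 \<le> i" "i < j" "j \<le> I"
  shows "drift lam d I y i j = flows lam d I y (i, j)"
proof -
  have D: "(\<Sum>q\<in>depF I. mv q (fst q - 1, snd q) (y (fst q) (snd q)) (i, j)) = y (i + 1) j - y i j"
    using dep_point[of i j I "\<lambda>q. y (fst q) (snd q)"] ij by simp
  have U: "(\<Sum>q\<in>updF I. mv q (fst q, fst q) (lam * real d * y (fst q) (snd q)) (i, j)) = - (lam * real d * y i j)"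
    using upd_point[of i j I "\<lambda>q. lam * real d * y (fst q) (snd q)"] ij by simp
  have Rh: "(\<Sum>q\<in>rhoF I. mv q (fst q + 1, min (snd q + 1) I) (rho lam d I (snd q - 1) (fst q) (snd q) y) (i, j))
     = rho lam d I (j - 2) (i - 1) (j - 1) y + (if j = I then rho lam d I (I - 1) (i - 1) I y else 0)
       - rho lam d I (j - 1) i j y"
  proof -
    have "2 \<le> j" "(i, j) \<noteq> (I, I)" using ij by auto
    then show ?thesis
      using rho_point[of i j I "\<lambda>q. rho lam d I (snd q - 1) (fst q) (snd q) y"] I ij
      by (simp add: diff_diff_add numeral_2_eq_2)
  qed
  have G: "(\<Sum>k\<in>{1..I-1}. mv (k,k) (k+1,k+1) (Gf lam d I k y) (i, j)) = 0"
    using G_point[of i j I] I ij by simp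
  have B: "mv (0,0) (1,1) (lam - Rf lam d I 0 y) (i, j) = 0"
    using ij by (auto simp: mv_eq)
  have lt: "i < j" using ij by simp
  have ip: "i > 0" using ij by simp
  show ?thesis unfolding flows_def D U Rh G B drift_lt[OF lt] using ip by simp
qed

lemma test_11:
  assumes I: "2 \<le> I"
  shows "drift lam d I y 1 1 = flows lam d I y (1, 1)"
proof -
  have D: "(\<Sum>q\<in>depF I. mv q (fst q - 1, snd q) (y (fst q) (snd q)) (1, 1)) = - y 1 1"
    using dep_point[of 1 1 I "\<lambda>q. y (fst q) (snd q)"] I by simp
  have U: "(\<Sum>q\<in>updF I. mv q (fst q, fst q) (lam * real d * y (fst q) (snd q)) (1, 1))
       = (\<Sum>k\<in>{1<..I}. lam * real d * y 1 k)"
    using upd_point[of 1 1 I "\<lambda>q. lam * real d * y (fst q) (snd q)"] I by simp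
  have Rh: "(\<Sum>q\<in>rhoF I. mv q (fst q + 1, min (snd q + 1) I) (rho lam d I (snd q - 1) (fst q) (snd q) y) (1, 1))
     = - rho lam d I 0 1 1 y"
    using rho_point[of 1 1 I "\<lambda>q. rho lam d I (snd q - 1) (fst q) (snd q) y"] I by simp
  have G: "(\<Sum>k\<in>{1..I-1}. mv (k,k) (k+1,k+1) (Gf lam d I k y) (1, 1)) = - Gf lam d I 1 y"
    using G_point[of 1 1 I] I by simp
  have B: "mv (0,0) (1,1) (lam - Rf lam d I 0 y) (1, 1) = lam - Rf lam d I 0 y"
    by (auto simp: mv_eq)
  have X: "xrow I y 1 - y 1 1 = (\<Sum>k\<in>{1<..I}. y 1 k)" using xrow_split[of 1 I y] I by simp
  show ?thesis unfolding flows_def D U Rh G B drift_11 X by (simp add: sum_distrib_left)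
qed

lemma test_ii:
  assumes I: "2 \<le> I" and i: "2 \<le> i" "i \<le> I - 1"
  shows "drift lam d I y i i = flows lam d I y (i, i)"
proof -
  have iI: "i \<le> I" "i \<noteq> I" using i I by auto
  have D: "(\<Sum>q\<in>depF I. mv q (fst q - 1, snd q) (y (fst q) (snd q)) (i, i)) = - y i i"
    using dep_point[of i i I "\<lambda>q. y (fst q) (snd q)"] i iI by simp
  have U: "(\<Sum>q\<in>updF I. mv q (fst q, fst q) (lam * real d * y (fst q) (snd q)) (i, i))
       = (\<Sum>k\<in>{i<..I}. lam * real d * y i k)"
    using upd_point[of i i I "\<lambda>q. lam * real d * y (fst q) (snd q)"] iI by simp
  have Rh: "(\<Sum>q\<in>rhoF I. mv q (fst q + 1, min (snd q + 1) I) (rho lam d I (snd q - 1) (fst q) (snd q) y) (i, i))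
     = rho lam d I (i - 2) (i - 1) (i - 1) y - rho lam d I (i - 1) i i y"
    using rho_point[of i i I "\<lambda>q. rho lam d I (snd q - 1) (fst q) (snd q) y"] I i iI by (simp add: diff_diff_add numeral_2_eq_2)
  have G: "(\<Sum>k\<in>{1..I-1}. mv (k,k) (k+1,k+1) (Gf lam d I k y) (i, i)) = Gf lam d I (i - 1) y - Gf lam d I i y"
    using G_point[of i i I] I i iI by simp
  have B: "mv (0,0) (1,1) (lam - Rf lam d I 0 y) (i, i) = 0"
    using i by (auto simp: mv_eq)
  have X: "xrow I y i - y i i = (\<Sum>k\<in>{i<..I}. y i k)" using xrow_split[of i I y] iI by simp
  show ?thesis unfolding flows_def D U Rh G B drift_ii[OF i] X by (simp add: sum_distrib_left)
qed

lemma test_II: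
  assumes I: "2 \<le> I"
  shows "drift lam d I y I I = flows lam d I y (I, I)"
proof -
  have D: "(\<Sum>q\<in>depF I. mv q (fst q - 1, snd q) (y (fst q) (snd q)) (I, I)) = - y I I"
    using dep_point[of I I I "\<lambda>q. y (fst q) (snd q)"] I by simp
  have U: "(\<Sum>q\<in>updF I. mv q (fst q, fst q) (lam * real d * y (fst q) (snd q)) (I, I)) = 0"
    using upd_point[of I I I "\<lambda>q. lam * real d * y (fst q) (snd q)"] by simp
  have Rh: "(\<Sum>q\<in>rhoF I. mv q (fst q + 1, min (snd q + 1) I) (rho lam d I (snd q - 1) (fst q) (snd q) y) (I, I))
     = rho lam d I (I - 2) (I - 1) (I - 1) y + rho lam d I (I - 1) (I - 1) I y"
    using rho_point[of I I I "\<lambda>q. rho lam d I (snd q - 1) (fst q) (snd q) y"] I by (simp add: diff_diff_add numeral_2_eq_2)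
  have G: "(\<Sum>k\<in>{1..I-1}. mv (k,k) (k+1,k+1) (Gf lam d I k y) (I, I)) = Gf lam d I (I - 1) y"
    using G_point[of I I I] I by simp
  have B: "mv (0,0) (1,1) (lam - Rf lam d I 0 y) (I, I) = 0"
    using I by (auto simp: mv_eq)
  show ?thesis unfolding flows_def D U Rh G B drift_II[OF I] by simp
qed

lemma drift_flows:
  assumes I: "2 \<le> I" and ij: "i \<le> j" "j \<le> I"
  shows "drift lam d I y i j = flows lam d I y (i, j)"
proof -
  consider (a) "i = 0 \<and> j = 0" | (b) "i = 0 \<and> 1 \<le> j" | (b2) "1 \<le> i \<and> i < j" | (c) "i = 1 \<and> j = 1"
    | (e) "i = j \<and> 2 \<le> i \<and> i \<le> I - 1" | (f) "i = I \<and> j = I" using ij by linarith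
  then show ?thesis
  proof cases
    case a then show ?thesis using test_a[OF I] by simp
  next
    case b then show ?thesis using test_0j[OF I, of j] ij by simp
  next
    case b2 then show ?thesis using test_ij[OF I, of i j] ij by simp
  next
    case c then show ?thesis using test_11[OF I] by simp
  next
    case e then show ?thesis using test_ii[OF I, of i] by simp
  next
    case f then show ?thesis using test_II[OF I] by simp
  qed
qed


lemma sum_idx: "(\<Sum>p\<in>idx I. f p) = (\<Sum>i=0..I. \<Sum>j=i..I. f (i, j))"
proof -
  have "idx I = Sigma {0..I} (\<lambda>i. {i..I})" unfolding idx_def by auto
  then show ?thesis by (simp add: sum.Sigma)
qed

lemma sum_family:
  assumes "finite S" "finite F" "\<And>q. q \<in> F \<Longrightarrow> q \<in> S" "\<And>q. q \<in> F \<Longrightarrow> D q \<in> S"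
  shows "(\<Sum>p\<in>S. phi p * (\<Sum>q\<in>F. mv q (D q) (r q) p)) = (\<Sum>q\<in>F. r q * (phi (D q) - phi q))"
proof -
  have "(\<Sum>p\<in>S. phi p * (\<Sum>q\<in>F. mv q (D q) (r q) p)) = (\<Sum>p\<in>S. \<Sum>q\<in>F. phi p * mv q (D q) (r q) p)"
    by (simp add: sum_distrib_left)
  also have "\<dots> = (\<Sum>q\<in>F. \<Sum>p\<in>S. phi p * mv q (D q) (r q) p)" by (rule sum.swap)
  also have "\<dots> = (\<Sum>q\<in>F. r q * (phi (D q) - phi q))"
    using assms by (intro sum.cong refl sum_mv_phi) auto
  finally show ?thesis .
qed

lemma family_mem:
  "q \<in> depF I \<Longrightarrow> q \<in> idx I" "q \<in> depF I \<Longrightarrow> (fst q - 1, snd q) \<in> idx I"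
  "q \<in> updF I \<Longrightarrow> q \<in> idx I" "q \<in> updF I \<Longrightarrow> (fst q, fst q) \<in> idx I"
  "q \<in> rhoF I \<Longrightarrow> q \<in> idx I" "q \<in> rhoF I \<Longrightarrow> (fst q + 1, min (snd q + 1) I) \<in> idx I"
  unfolding depF_def updF_def rhoF_def idx_def by (auto simp: min_def split: prod.splits)

lemma sum_phi_drift:
  assumes I: "2 \<le> I"
  shows "(\<Sum>p\<in>idx I. phi p * drift lam d I y (fst p) (snd p)) =
     (\<Sum>q\<in>depF I. y (fst q) (snd q) * (phi (fst q - 1, snd q) - phi q))
   + (\<Sum>q\<in>updF I. (lam * real d * y (fst q) (snd q)) * (phi (fst q, fst q) - phi q))
   + (lam - Rf lam d I 0 y) * (phi (1, 1) - phi (0, 0))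
   + (\<Sum>q\<in>rhoF I. rho lam d I (snd q - 1) (fst q) (snd q) y * (phi (fst q + 1, min (snd q + 1) I) - phi q))
   + (\<Sum>k\<in>{1..I-1}. Gf lam d I k y * (phi (k + 1, k + 1) - phi (k, k)))"
proof -
  have "(\<Sum>p\<in>idx I. phi p * drift lam d I y (fst p) (snd p)) = (\<Sum>p\<in>idx I. phi p * flows lam d I y p)"
    by (intro sum.cong refl) (auto simp: drift_flows[OF I] idx_def)
  also have "\<dots> =
     (\<Sum>p\<in>idx I. phi p * (\<Sum>q\<in>depF I. mv q (fst q - 1, snd q) (y (fst q) (snd q)) p))
   + (\<Sum>p\<in>idx I. phi p * (\<Sum>q\<in>updF I. mv q (fst q, fst q) (lam * real d * y (fst q) (snd q)) p))
   + (\<Sum>p\<in>idx I. phi p * mv (0,0) (1,1) (lam - Rf lam d I 0 y) p)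
   + (\<Sum>p\<in>idx I. phi p * (\<Sum>q\<in>rhoF I. mv q (fst q + 1, min (snd q + 1) I) (rho lam d I (snd q - 1) (fst q) (snd q) y) p))
   + (\<Sum>p\<in>idx I. phi p * (\<Sum>k\<in>{1..I-1}. mv (k,k) (k+1,k+1) (Gf lam d I k y) p))"
    unfolding flows_def by (simp add: distrib_left sum.distrib)
  also have "(\<Sum>p\<in>idx I. phi p * (\<Sum>q\<in>depF I. mv q (fst q - 1, snd q) (y (fst q) (snd q)) p))
      = (\<Sum>q\<in>depF I. y (fst q) (snd q) * (phi (fst q - 1, snd q) - phi q))"
    by (rule sum_family) (auto simp: depF_def)
  also have "(\<Sum>p\<in>idx I. phi p * (\<Sum>q\<in>updF I. mv q (fst q, fst q) (lam * real d * y (fst q) (snd q)) p))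
      = (\<Sum>q\<in>updF I. (lam * real d * y (fst q) (snd q)) * (phi (fst q, fst q) - phi q))"
    by (rule sum_family) (auto simp: updF_def)
  also have "(\<Sum>p\<in>idx I. phi p * mv (0,0) (1,1) (lam - Rf lam d I 0 y) p) = (lam - Rf lam d I 0 y) * (phi (1, 1) - phi (0, 0))"
    using I by (intro sum_mv_phi) auto
  also have "(\<Sum>p\<in>idx I. phi p * (\<Sum>q\<in>rhoF I. mv q (fst q + 1, min (snd q + 1) I) (rho lam d I (snd q - 1) (fst q) (snd q) y) p))
      = (\<Sum>q\<in>rhoF I. rho lam d I (snd q - 1) (fst q) (snd q) y * (phi (fst q + 1, min (snd q + 1) I) - phi q))"
    by (rule sum_family) (auto simp: rhoF_def min_def)
  also have "(\<Sum>p\<in>idx I. phi p * (\<Sum>k\<in>{1..I-1}. mv (k,k) (k+1,k+1) (Gf lam d I k y) p))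
      = (\<Sum>k\<in>{1..I-1}. Gf lam d I k y * (phi (k + 1, k + 1) - phi (k, k)))"
  proof -
    have "(\<Sum>p\<in>idx I. phi p * (\<Sum>k\<in>{1..I-1}. mv (k,k) (k+1,k+1) (Gf lam d I k y) p))
       = (\<Sum>p\<in>idx I. \<Sum>k\<in>{1..I-1}. phi p * mv (k,k) (k+1,k+1) (Gf lam d I k y) p)"
      by (simp add: sum_distrib_left)
    also have "\<dots> = (\<Sum>k\<in>{1..I-1}. \<Sum>p\<in>idx I. phi p * mv (k,k) (k+1,k+1) (Gf lam d I k y) p)"
      by (rule sum.swap)
    also have "\<dots> = (\<Sum>k\<in>{1..I-1}. Gf lam d I k y * (phi (k + 1, k + 1) - phi (k, k)))"
      by (intro sum.cong refl sum_mv_phi) auto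
    finally show ?thesis .
  qed
  finally show ?thesis .
qed

definition Phi :: "nat \<Rightarrow> (nat \<times> nat \<Rightarrow> real) \<Rightarrow> (nat \<Rightarrow> nat \<Rightarrow> real) \<Rightarrow> real" where
  "Phi I w y = (\<Sum>p\<in>idx I. w p * y (fst p) (snd p))"

definition dPhi :: "real \<Rightarrow> nat \<Rightarrow> nat \<Rightarrow> (nat \<times> nat \<Rightarrow> real) \<Rightarrow> (nat \<Rightarrow> nat \<Rightarrow> real) \<Rightarrow> real" where
  "dPhi lam d I w y = (\<Sum>p\<in>idx I. w p * drift lam d I y (fst p) (snd p))"

definition wL :: "nat \<times> nat \<Rightarrow> real" where "wL p = real (fst p)"
definition w0 :: "nat \<times> nat \<Rightarrow> real" where "w0 p = (if fst p = 0 then 1 else 0)"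
definition w1 :: "nat \<times> nat \<Rightarrow> real" where "w1 p = (if fst p = 1 then 1 else 0)"
definition wB :: "nat \<times> nat \<Rightarrow> real" where "wB p = (if 1 \<le> fst p then 1 else 0)"

lemma dPhi_L:
  assumes I: "2 \<le> I"
  shows "dPhi lam d I wL y = - Phi I wB y + (lam - Rf lam d I 0 y)
     + (\<Sum>q\<in>rhoF I. rho lam d I (snd q - 1) (fst q) (snd q) y) + (\<Sum>k\<in>{1..I-1}. Gf lam d I k y)"
proof -
  have dep: "(\<Sum>q\<in>depF I. y (fst q) (snd q) * (wL (fst q - 1, snd q) - wL q)) = - Phi I wB y"
  proof -
    have "(\<Sum>q\<in>depF I. y (fst q) (snd q) * (wL (fst q - 1, snd q) - wL q)) = (\<Sum>q\<in>depF I. - y (fst q) (snd q))"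
      by (intro sum.cong refl) (auto simp: wL_def depF_def of_nat_diff)
    also have "\<dots> = - (\<Sum>q\<in>depF I. y (fst q) (snd q))" by (simp add: sum_negf)
    also have "(\<Sum>q\<in>depF I. y (fst q) (snd q)) = Phi I wB y"
    proof -
      have "Phi I wB y = (\<Sum>q\<in>idx I. if 1 \<le> fst q then y (fst q) (snd q) else 0)"
        unfolding Phi_def wB_def by (intro sum.cong refl) auto
      also have "\<dots> = (\<Sum>q\<in>depF I. y (fst q) (snd q))"
        unfolding depF_def by (simp add: sum.inter_filter)
      finally show ?thesis by simp
    qed
    finally show ?thesis .
  qed
  have upd: "(\<Sum>q\<in>updF I. (lam * real d * y (fst q) (snd q)) * (wL (fst q, fst q) - wL q)) = 0"
    by (simp add: wL_def)
  have rh: "(\<Sum>q\<in>rhoF I. rho lam d I (snd q - 1) (fst q) (snd q) y * (wL (fst q + 1, min (snd q + 1) I) - wL q))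
      = (\<Sum>q\<in>rhoF I. rho lam d I (snd q - 1) (fst q) (snd q) y)"
    by (simp add: wL_def)
  have g: "(\<Sum>k\<in>{1..I-1}. Gf lam d I k y * (wL (k + 1, k + 1) - wL (k, k))) = (\<Sum>k\<in>{1..I-1}. Gf lam d I k y)"
    by (simp add: wL_def)
  show ?thesis unfolding dPhi_def sum_phi_drift[OF I] dep upd rh g by (simp add: wL_def)
qed

lemma dPhi_0:
  assumes I: "2 \<le> I"
  shows "dPhi lam d I w0 y = Phi I w1 y - (lam - Rf lam d I 0 y)
     - (\<Sum>q\<in>rhoF I. if fst q = 0 then rho lam d I (snd q - 1) (fst q) (snd q) y else 0)"
proof -
  have dep: "(\<Sum>q\<in>depF I. y (fst q) (snd q) * (w0 (fst q - 1, snd q) - w0 q)) = Phi I w1 y"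
  proof -
    have "(\<Sum>q\<in>depF I. y (fst q) (snd q) * (w0 (fst q - 1, snd q) - w0 q))
        = (\<Sum>q\<in>depF I. if fst q = 1 then y (fst q) (snd q) else 0)"
      by (intro sum.cong refl) (auto simp: w0_def depF_def)
    also have "\<dots> = (\<Sum>q\<in>idx I. if fst q = 1 then y (fst q) (snd q) else 0)"
      unfolding depF_def by (intro sum.mono_neutral_cong_left) auto
    also have "\<dots> = Phi I w1 y"
      unfolding Phi_def w1_def by (intro sum.cong refl) auto
    finally show ?thesis .
  qed
  have upd: "(\<Sum>q\<in>updF I. (lam * real d * y (fst q) (snd q)) * (w0 (fst q, fst q) - w0 q)) = 0"
    by (simp add: w0_def)
  have rh: "(\<Sum>q\<in>rhoF I. rho lam d I (snd q - 1) (fst q) (snd q) y * (w0 (fst q + 1, min (snd q + 1) I) - w0 q))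
      = - (\<Sum>q\<in>rhoF I. if fst q = 0 then rho lam d I (snd q - 1) (fst q) (snd q) y else 0)"
    by (simp add: w0_def sum_negf[symmetric] if_distrib cong: if_cong)
  have g: "(\<Sum>k\<in>{1..I-1}. Gf lam d I k y * (w0 (k + 1, k + 1) - w0 (k, k))) = 0"
    by (intro sum.neutral) (auto simp: w0_def)
  show ?thesis unfolding dPhi_def sum_phi_drift[OF I] dep upd rh g by (simp add: w0_def)
qed


definition Sg :: "nat \<Rightarrow> nat \<Rightarrow> (nat \<Rightarrow> nat \<Rightarrow> real) \<Rightarrow> real" where
  "Sg I k y = (\<Sum>i=0..k. real (k + 1 - i) * xrow I y i)"
definition Qg :: "nat \<Rightarrow> nat \<Rightarrow> (nat \<Rightarrow> nat \<Rightarrow> real) \<Rightarrow> real" where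
  "Qg I k y = (\<Sum>i=0..k. xrow I y i)"
definition Cg :: "nat \<Rightarrow> (nat \<Rightarrow> nat \<Rightarrow> real) \<Rightarrow> real" where
  "Cg k y = (\<Sum>i=0..k. xcol y i)"

lemma Rf_alt: "Rf lam d I k y = (if Cg k y = 0 then max 0 (lam * (1 - real d * Sg I k y)) else 0)"
  unfolding Rf_def Cg_def Sg_def by simp

lemma Gf_alt: "Gf lam d I k y = (if Cg k y = 0 \<and> real d * Sg I k y \<le> 1 then lam * real d * Qg I k y else 0)"
  unfolding Gf_def Cg_def Sg_def Qg_def by simp

lemma Sg_Suc: "Sg I (Suc k) y = Sg I k y + Qg I (Suc k) y"
proof -
  have "Sg I (Suc k) y = (\<Sum>i=0..k. real (k + 2 - i) * xrow I y i) + xrow I y (Suc k)"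
    unfolding Sg_def by simp
  also have "(\<Sum>i=0..k. real (k + 2 - i) * xrow I y i) = (\<Sum>i=0..k. real (k + 1 - i) * xrow I y i + xrow I y i)"
    by (intro sum.cong refl) (auto simp: of_nat_diff algebra_simps)
  also have "\<dots> = Sg I k y + Qg I k y" unfolding Sg_def Qg_def by (simp add: sum.distrib)
  finally show ?thesis unfolding Qg_def by simp
qed

lemma Cg_Suc: "Cg (Suc k) y = Cg k y + xcol y (Suc k)"
  unfolding Cg_def by simp

context
  fixes y :: "nat \<Rightarrow> nat \<Rightarrow> real" and I :: nat
  assumes nn: "\<And>i j. y i j \<ge> 0"
begin

lemma xrow_nn: "xrow I y i \<ge> 0" unfolding xrow_def using nn by (simp add: sum_nonneg)
lemma xcol_nn: "xcol y i \<ge> 0" unfolding xcol_def using nn by (simp add: sum_nonneg)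
lemma Qg_nn: "Qg I k y \<ge> 0" unfolding Qg_def using xrow_nn by (simp add: sum_nonneg)
lemma Sg_nn: "Sg I k y \<ge> 0" unfolding Sg_def using xrow_nn by (intro sum_nonneg mult_nonneg_nonneg) auto
lemma Cg_nn: "Cg k y \<ge> 0" unfolding Cg_def using xcol_nn by (simp add: sum_nonneg)

lemma Sg_ge_r0: "Sg I k y \<ge> real (k + 1) * xrow I y 0"
proof -
  have "Sg I k y = real (k + 1) * xrow I y 0 + (\<Sum>i=1..k. real (k + 1 - i) * xrow I y i)"
    unfolding Sg_def by (simp add: sum.atLeast_Suc_atMost)
  moreover have "(\<Sum>i=1..k. real (k + 1 - i) * xrow I y i) \<ge> 0" using xrow_nn by (intro sum_nonneg mult_nonneg_nonneg) auto
  ultimately show ?thesis by simp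
qed

lemma Rf_nn: "lam > 0 \<Longrightarrow> Rf lam d I k y \<ge> 0" unfolding Rf_alt by auto
lemma Rf_le: "lam > 0 \<Longrightarrow> Rf lam d I k y \<le> lam"
  unfolding Rf_alt using Sg_nn[of k] by (auto simp: mult_le_cancel_left1 algebra_simps)
lemma Gf_nn: "lam > 0 \<Longrightarrow> Gf lam d I k y \<ge> 0" unfolding Gf_alt using Qg_nn[of k] by auto
lemma rho_nn: "lam > 0 \<Longrightarrow> rho lam d I k a b y \<ge> 0"
  unfolding rho_def using Rf_nn[of lam d k] nn[of a b] by (auto intro: divide_nonneg_pos mult_nonneg_nonneg)

lemma arr_step:
  assumes lam: "lam > 0" and d: "real d > 0"
  shows "(if xcol y (Suc k) > 0 then Rf lam d I k y else 0) + Gf lam d I (Suc k) y + Rf lam d I (Suc k) y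
         \<le> Rf lam d I k y"
proof (cases "xcol y (Suc k) > 0")
  case True
  then have "Cg (Suc k) y \<noteq> 0" using Cg_nn[of k] Cg_Suc[of k y] by simp
  then show ?thesis using True by (simp add: Gf_alt Rf_alt[of lam d I "Suc k"])
next
  case False
  then have x0: "xcol y (Suc k) = 0" using xcol_nn[of "Suc k"] by simp
  then have C: "Cg (Suc k) y = Cg k y" using Cg_Suc[of k y] by simp
  show ?thesis
  proof (cases "Cg k y = 0")
    case False2: False
    then show ?thesis using False C by (simp add: Gf_alt Rf_alt)
  next
    case True
    have S: "Sg I (Suc k) y = Sg I k y + Qg I (Suc k) y" by (rule Sg_Suc)
    show ?thesis
    proof (cases "real d * Sg I (Suc k) y \<le> 1")
      case le: True
      have le0: "real d * Sg I k y \<le> 1" using le S Qg_nn[of "Suc k"] d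
        by (smt (verit) mult_left_mono)
      have p1: "lam * (1 - real d * Sg I (Suc k) y) \<ge> 0" using le lam by simp
      have p0: "lam * (1 - real d * Sg I k y) \<ge> 0" using le0 lam by simp
      have e1: "Rf lam d I (Suc k) y = lam * (1 - real d * Sg I (Suc k) y)"
        using C True p1 by (simp add: Rf_alt)
      have e2: "Rf lam d I k y = lam * (1 - real d * Sg I k y)"
        using True p0 by (simp add: Rf_alt)
      have e3: "Gf lam d I (Suc k) y = lam * real d * Qg I (Suc k) y"
        using C True le by (simp add: Gf_alt)
      show ?thesis unfolding e1 e2 e3 S using False by (simp add: algebra_simps)
    next
      case gt: False
      then have "lam * (1 - real d * Sg I (Suc k) y) \<le> 0" using lam by (simp add: mult_nonneg_nonpos)
      then show ?thesis using False C True gt Rf_nn[where d=d and k=k, OF lam] by (simp add: Gf_alt Rf_alt[of lam d I "Suc k"])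
    qed
  qed
qed

lemma arr_induct:
  assumes lam: "lam > 0" and d: "real d > 0"
  shows "(\<Sum>b=1..k. if xcol y b > 0 then Rf lam d I (b - 1) y else 0) + (\<Sum>j=1..k. Gf lam d I j y) + Rf lam d I k y
         \<le> Rf lam d I 0 y"
proof (induction k)
  case 0
  then show ?case by simp
next
  case (Suc k)
  have "(\<Sum>b=1..Suc k. if xcol y b > 0 then Rf lam d I (b - 1) y else 0) + (\<Sum>j=1..Suc k. Gf lam d I j y) + Rf lam d I (Suc k) y
      = (\<Sum>b=1..k. if xcol y b > 0 then Rf lam d I (b - 1) y else 0) + (\<Sum>j=1..k. Gf lam d I j y)
        + ((if xcol y (Suc k) > 0 then Rf lam d I k y else 0) + Gf lam d I (Suc k) y + Rf lam d I (Suc k) y)"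
    by simp
  also have "\<dots> \<le> (\<Sum>b=1..k. if xcol y b > 0 then Rf lam d I (b - 1) y else 0) + (\<Sum>j=1..k. Gf lam d I j y) + Rf lam d I k y"
    using arr_step[OF lam d, of k] by simp
  also have "\<dots> \<le> Rf lam d I 0 y" using Suc .
  finally show ?case .
qed

lemma rho_col_le:
  assumes lam: "lam > 0"
  shows "(\<Sum>q\<in>rhoF I. rho lam d I (snd q - 1) (fst q) (snd q) y)
       \<le> (\<Sum>b=1..I. if xcol y b > 0 then Rf lam d I (b - 1) y else 0)"
proof -
  define F where "F = {p \<in> idx I. 1 \<le> snd p}"
  have "(\<Sum>q\<in>rhoF I. rho lam d I (snd q - 1) (fst q) (snd q) y) \<le> (\<Sum>q\<in>F. rho lam d I (snd q - 1) (fst q) (snd q) y)"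
    by (rule sum_mono2) (auto simp: F_def rhoF_def intro: rho_nn[OF lam])
  also have "(\<Sum>q\<in>F. rho lam d I (snd q - 1) (fst q) (snd q) y) = (\<Sum>b=1..I. \<Sum>a=0..b. rho lam d I (b - 1) a b y)"
  proof -
    have e: "F = (\<lambda>q. (snd q, fst q)) ` Sigma {1..I} (\<lambda>b. {0..b})" unfolding F_def idx_def by force
    have inj: "inj_on (\<lambda>q. (snd q, fst q)) (Sigma {1..I} (\<lambda>b. {0..b}))" by (auto simp: inj_on_def)
    have "(\<Sum>q\<in>F. rho lam d I (snd q - 1) (fst q) (snd q) y)
        = (\<Sum>x\<in>Sigma {1..I} (\<lambda>b. {0..b}). rho lam d I (fst x - 1) (snd x) (fst x) y)"
      unfolding e sum.reindex[OF inj] by simp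
    also have "\<dots> = (\<Sum>b=1..I. \<Sum>a=0..b. rho lam d I (b - 1) a b y)"
      using sum.Sigma[of "{1..I}" "\<lambda>b. {0..b}" "\<lambda>b a. rho lam d I (b - 1) a b y"] by (simp add: split_beta)
    finally show ?thesis .
  qed
  also have "\<dots> = (\<Sum>b=1..I. if xcol y b > 0 then Rf lam d I (b - 1) y else 0)"
  proof (intro sum.cong refl)
    fix b assume "b \<in> {1..I}"
    show "(\<Sum>a=0..b. rho lam d I (b - 1) a b y) = (if xcol y b > 0 then Rf lam d I (b - 1) y else 0)"
    proof (cases "xcol y b > 0")
      case True
      have "(\<Sum>a=0..b. rho lam d I (b - 1) a b y) = Rf lam d I (b - 1) y * (\<Sum>a=0..b. y a b) / xcol y b"
        using True by (simp add: rho_def sum_divide_distrib sum_distrib_left)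
      also have "(\<Sum>a=0..b. y a b) = xcol y b" unfolding xcol_def by simp
      finally show ?thesis using True by simp
    qed (simp add: rho_def)
  qed
  finally show ?thesis .
qed

lemma arrivals_le:
  assumes lam: "lam > 0" and d: "real d > 0" and I: "2 \<le> I"
  shows "(\<Sum>q\<in>rhoF I. rho lam d I (snd q - 1) (fst q) (snd q) y) + (\<Sum>k\<in>{1..I-1}. Gf lam d I k y) \<le> Rf lam d I 0 y"
proof -
  have A: "(\<Sum>b=1..I-1. if xcol y b > 0 then Rf lam d I (b - 1) y else 0) + (\<Sum>j=1..I-1. Gf lam d I j y) + Rf lam d I (I-1) y
         \<le> Rf lam d I 0 y" by (rule arr_induct[OF lam d])
  have "(\<Sum>b=1..I. if xcol y b > 0 then Rf lam d I (b - 1) y else 0)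
      = (\<Sum>b=1..I-1. if xcol y b > 0 then Rf lam d I (b - 1) y else 0) + (if xcol y I > 0 then Rf lam d I (I - 1) y else 0)"
  proof -
    have e: "{1..I} = insert I {1..I-1}" using I by auto
    have "I \<notin> {1..I-1}" using I by auto
    then show ?thesis unfolding e by (simp add: sum.insert add.commute)
  qed
  moreover have "(if xcol y I > 0 then Rf lam d I (I - 1) y else 0) \<le> Rf lam d I (I-1) y"
    using Rf_nn[OF lam] by auto
  ultimately show ?thesis using rho_col_le[where d=d, OF lam] A by linarith
qed

lemma P2_zero:
  assumes "real d * xrow I y 0 \<ge> 1" and lam0: "lam \<ge> 0"
  shows "Rf lam d I k y = 0" "1 \<le> k \<Longrightarrow> Gf lam d I k y = 0" "rho lam d I k a b y = 0"
proof -
  have r0: "xrow I y 0 \<ge> 0" by (rule xrow_nn)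
  have "real d * Sg I k y \<ge> real d * (real (k + 1) * xrow I y 0)"
    using Sg_ge_r0[of k] by (intro mult_left_mono) auto
  moreover have "real d * (real (k + 1) * xrow I y 0) \<ge> real d * xrow I y 0"
    using r0 by (simp add: mult_left_mono mult_right_mono algebra_simps)
  ultimately have S1: "real d * Sg I k y \<ge> 1" using assms by linarith
  then have "lam * (1 - real d * Sg I k y) \<le> 0" using lam0 by (simp add: mult_nonneg_nonpos)
  then show R: "Rf lam d I k y = 0" unfolding Rf_alt by auto
  show "1 \<le> k \<Longrightarrow> Gf lam d I k y = 0"
  proof -
    assume k: "1 \<le> k"
    have "real d * (real (k + 1) * xrow I y 0) \<ge> 2 * (real d * xrow I y 0)"
    proof -
      have "real (k + 1) \<ge> 2" using k by simp
      then have "real (k + 1) * (real d * xrow I y 0) \<ge> 2 * (real d * xrow I y 0)"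
        using assms by (intro mult_right_mono) auto
      then show ?thesis by (simp add: algebra_simps)
    qed
    then have "real d * Sg I k y > 1" using Sg_ge_r0[of k] assms
      by (smt (verit, best) mult_left_mono of_nat_0_le_iff)
    then show ?thesis unfolding Gf_alt by auto
  qed
  show "rho lam d I k a b y = 0" unfolding rho_def using R by simp
qed

end


lemma mono_int:
  assumes ac: "abs_cont_on_interval F s T" and sT: "s \<le> T"
    and ae: "AE t in lborel. t \<in> {s<..<T} \<longrightarrow> (\<exists>D. (F has_real_derivative D) (at t) \<and> D \<le> 0)"
  shows "F T \<le> F s"
proof -
  obtain N where N: "{t \<in> space lborel. \<not> (t \<in> {s<..<T} \<longrightarrow> (\<exists>D. (F has_real_derivative D) (at t) \<and> D \<le> 0))} \<subseteq> N"
    "emeasure lborel N = 0" "N \<in> sets lborel"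
    using AE_E[OF ae] by blast
  have Nn: "N \<in> null_sets lborel" using N(2,3) by auto
  show ?thesis
  proof (rule ac_mono[OF ac sT Nn])
    fix t assume "t \<in> {s<..<T}" "t \<notin> N"
    then show "\<exists>D. (F has_real_derivative D) (at t) \<and> D \<le> 0" using N(1) by auto
  qed
qed

lemma ac_exp_shift: "abs_cont_on_interval (\<lambda>t. exp (c * (t - s))) a b"
proof -
  have "(\<lambda>t. exp (c * (t - s))) = (\<lambda>t. exp (- c * s) * exp (c * t))"
    by (rule ext) (simp add: exp_add[symmetric] algebra_simps)
  then show ?thesis using ac_scale[OF ac_exp, of "exp (- c * s)" c a b] by simp
qed

lemma G2_int:
  assumes ac: "abs_cont_on_interval F s T" and sT: "s \<le> T"
    and a: "a > 0" and b: "0 < \<beta>" "\<beta> < a" and K: "K \<ge> 0"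
    and ae: "AE t in lborel. t \<in> {s<..<T} \<longrightarrow> (\<exists>D. (F has_real_derivative D) (at t) \<and> D \<le> - a * F t + K * exp (- \<beta> * (t - s)))"
  shows "F T \<le> (max (F s) 0 + K / (a - \<beta>)) * exp (- \<beta> * (T - s))"
proof -
  define H where "H t = exp (a * (t - s)) * F t - K / (a - \<beta>) * exp ((a - \<beta>) * (t - s))" for t
  have acH: "abs_cont_on_interval H s T"
    unfolding H_def
    by (intro ac_diff ac_mult ac_scale ac_exp_shift ac)
  have aeH: "AE t in lborel. t \<in> {s<..<T} \<longrightarrow> (\<exists>D. (H has_real_derivative D) (at t) \<and> D \<le> 0)"
    using ae
  proof (rule AE_mp, intro AE_I2 impI)
    fix t assume h: "t \<in> {s<..<T} \<longrightarrow> (\<exists>D. (F has_real_derivative D) (at t) \<and> D \<le> - a * F t + K * exp (- \<beta> * (t - s)))"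
      and t: "t \<in> {s<..<T}"
    then obtain D where D: "(F has_real_derivative D) (at t)" "D \<le> - a * F t + K * exp (- \<beta> * (t - s))" by blast
    define E where "E = a * exp (a * (t - s)) * F t + D * exp (a * (t - s)) - K / (a - \<beta>) * ((a - \<beta>) * exp ((a - \<beta>) * (t - s)))"
    have d1: "((\<lambda>t. exp (a * (t - s))) has_real_derivative a * exp (a * (t - s))) (at t)"
      by (auto intro!: derivative_eq_intros)
    have d2: "((\<lambda>t. exp ((a - \<beta>) * (t - s))) has_real_derivative (a - \<beta>) * exp ((a - \<beta>) * (t - s))) (at t)"
      by (auto intro!: derivative_eq_intros)
    have "(H has_real_derivative E) (at t)"
      unfolding H_def E_def by (rule DERIV_diff[OF DERIV_mult[OF d1 D(1)] DERIV_cmult[OF d2]])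
    moreover have "E \<le> 0"
    proof -
      have ab: "a - \<beta> \<noteq> 0" using b by simp
      have "exp (a * (t - s)) * (a * F t + D) \<le> exp (a * (t - s)) * (K * exp (- \<beta> * (t - s)))"
        using D(2) by (intro mult_left_mono) auto
      also have "\<dots> = K * exp ((a - \<beta>) * (t - s))"
        by (simp add: mult_exp_exp algebra_simps)
      finally have "exp (a * (t - s)) * (a * F t + D) \<le> K * exp ((a - \<beta>) * (t - s))" .
      moreover have kk: "K / (a - \<beta>) * ((a - \<beta>) * exp ((a - \<beta>) * (t - s))) = K * exp ((a - \<beta>) * (t - s))"
        using ab by simp
      moreover have "E = exp (a * (t - s)) * (a * F t + D) - K * exp ((a - \<beta>) * (t - s))"
        unfolding E_def kk by (simp add: algebra_simps)
      ultimately show ?thesis by simp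
    qed
    ultimately show "\<exists>D. (H has_real_derivative D) (at t) \<and> D \<le> 0" by blast
  qed
  have "H T \<le> H s" by (rule mono_int[OF acH sT aeH])
  then have "exp (a * (T - s)) * F T \<le> F s - K / (a - \<beta>) + K / (a - \<beta>) * exp ((a - \<beta>) * (T - s))"
    unfolding H_def by simp
  then have "exp (- a * (T - s)) * (exp (a * (T - s)) * F T) \<le> exp (- a * (T - s)) * (F s - K / (a - \<beta>) + K / (a - \<beta>) * exp ((a - \<beta>) * (T - s)))"
    by (intro mult_left_mono) auto
  moreover have "exp (- a * (T - s)) * (exp (a * (T - s)) * F T) = F T"
  proof -
    have e: "exp (- a * (T - s)) * exp (a * (T - s)) = 1"
      by (metis exp_minus_inverse mult.commute mult_minus_left)
    show ?thesis by (simp only: mult.assoc[symmetric] e mult_1_left)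
  qed
  ultimately have "F T \<le> exp (- a * (T - s)) * (F s - K / (a - \<beta>) + K / (a - \<beta>) * exp ((a - \<beta>) * (T - s)))"
    by linarith
  also have "\<dots> = exp (- a * (T - s)) * F s - K / (a - \<beta>) * exp (- a * (T - s)) + K / (a - \<beta>) * exp (- \<beta> * (T - s))"
    by (simp add: algebra_simps mult_exp_exp)
  also have "\<dots> \<le> max (F s) 0 * exp (- \<beta> * (T - s)) + K / (a - \<beta>) * exp (- \<beta> * (T - s))"
  proof -
    have e1: "exp (- a * (T - s)) \<le> exp (- \<beta> * (T - s))" using b sT by (simp add: mult_right_mono)
    have "exp (- a * (T - s)) * F s \<le> exp (- a * (T - s)) * max (F s) 0" by (simp add: mult_left_mono)
    also have "\<dots> \<le> exp (- \<beta> * (T - s)) * max (F s) 0" using e1 by (simp add: mult_right_mono)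
    finally have "exp (- a * (T - s)) * F s \<le> max (F s) 0 * exp (- \<beta> * (T - s))" by (simp add: mult.commute)
    moreover have "K / (a - \<beta>) * exp (- a * (T - s)) \<ge> 0" using K b by simp
    ultimately show ?thesis by linarith
  qed
  finally show ?thesis by (simp add: algebra_simps)
qed


definition w2 :: "nat \<times> nat \<Rightarrow> real" where "w2 p = (if 2 \<le> fst p then 1 else 0)"
definition wW :: "nat \<times> nat \<Rightarrow> real" where "wW p = real (fst p) - wB p"

lemma Phi_lin: "Phi I (\<lambda>p. a * w p + b * v p) y = a * Phi I w y + b * Phi I v y"
  unfolding Phi_def by (simp add: algebra_simps sum.distrib sum_distrib_left)

lemma dPhi_lin: "dPhi lam d I (\<lambda>p. a * w p + b * v p) y = a * dPhi lam d I w y + b * dPhi lam d I v y"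
  unfolding dPhi_def by (simp add: algebra_simps sum.distrib sum_distrib_left)

lemma Phi_cong: "(\<And>p. p \<in> idx I \<Longrightarrow> w p = v p) \<Longrightarrow> Phi I w y = Phi I v y"
  unfolding Phi_def by (intro sum.cong) auto

lemma dPhi_cong: "(\<And>p. p \<in> idx I \<Longrightarrow> w p = v p) \<Longrightarrow> dPhi lam d I w y = dPhi lam d I v y"
  unfolding dPhi_def by (intro sum.cong) auto

lemma dPhi_one: "2 \<le> I \<Longrightarrow> dPhi lam d I (\<lambda>p. 1) y = 0"
  unfolding dPhi_def using sum_phi_drift[of I "\<lambda>p. 1" lam d y] by simp

lemma simplex_nn: "y \<in> simplexS I \<Longrightarrow> y i j \<ge> 0"
  unfolding simplexS_def by auto

lemma simplex_one: "y \<in> simplexS I \<Longrightarrow> Phi I (\<lambda>p. 1) y = 1"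
  unfolding simplexS_def Phi_def by (simp add: sum_idx)

lemma Phi_mono:
  assumes "y \<in> simplexS I" "\<And>p. p \<in> idx I \<Longrightarrow> w p \<le> v p"
  shows "Phi I w y \<le> Phi I v y"
  unfolding Phi_def using assms simplex_nn[OF assms(1)]
  by (intro sum_mono mult_right_mono) auto

lemma Phi_nn:
  assumes "y \<in> simplexS I" "\<And>p. p \<in> idx I \<Longrightarrow> w p \<ge> 0"
  shows "Phi I w y \<ge> 0"
  using Phi_mono[OF assms(1), of "\<lambda>p. 0" w] assms(2) by (simp add: Phi_def)

lemma Phi_w0: "Phi I w0 y = xrow I y 0"
proof -
  have "Phi I w0 y = (\<Sum>i=0..I. \<Sum>j=i..I. (if i = 0 then 1 else 0) * y i j)"
    unfolding Phi_def sum_idx w0_def by simp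
  also have "\<dots> = (\<Sum>i\<in>{0..I}. if i = 0 then (\<Sum>j=0..I. y 0 j) else 0)"
    by (intro sum.cong refl) auto
  also have "\<dots> = (\<Sum>j=0..I. y 0 j)" by (simp add: sum.delta)
  finally show ?thesis unfolding xrow_def by simp
qed

lemma wB_eq: "wB p = 1 * 1 + (-1) * w0 p" unfolding wB_def w0_def by auto
lemma wB_split: "wB p = 1 * w1 p + 1 * w2 p" unfolding wB_def w1_def w2_def by auto
lemma wW_eq: "wW p = 1 * wL p + (-1) * wB p" unfolding wW_def wL_def by simp

context
  fixes y I
  assumes S: "y \<in> simplexS I"
begin

lemma nnS: "\<And>i j. 0 \<le> y i j" using simplex_nn[OF S] by blast

lemma B_eq: "Phi I wB y = 1 - Phi I w0 y"
  using Phi_lin[of I 1 "\<lambda>p. 1" "-1" w0 y] simplex_one[OF S] wB_eq by (simp add: Phi_def)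

lemma B_split: "Phi I wB y = Phi I w1 y + Phi I w2 y"
  using Phi_lin[of I 1 w1 1 w2 y] wB_split by (simp add: Phi_def)

lemma W_eq: "Phi I wW y = Phi I wL y - Phi I wB y"
  using Phi_lin[of I 1 wL "-1" wB y] wW_eq by (simp add: Phi_def)

lemma w1_nn: "Phi I w1 y \<ge> 0" by (rule Phi_nn[OF S]) (simp add: w1_def)
lemma w2_nn: "Phi I w2 y \<ge> 0" by (rule Phi_nn[OF S]) (simp add: w2_def)
lemma wB_nn: "Phi I wB y \<ge> 0" by (rule Phi_nn[OF S]) (simp add: wB_def)
lemma wL_nn: "Phi I wL y \<ge> 0" by (rule Phi_nn[OF S]) (simp add: wL_def)
lemma W_ge_w2: "Phi I w2 y \<le> Phi I wW y"
  by (rule Phi_mono[OF S]) (auto simp: w2_def wW_def wB_def)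
lemma W_le_w2: "Phi I wW y \<le> real (I - 1) * Phi I w2 y"
proof -
  have "Phi I wW y \<le> Phi I (\<lambda>p. real (I - 1) * w2 p + 0 * w2 p) y"
    by (rule Phi_mono[OF S]) (auto simp: w2_def wW_def wB_def idx_def of_nat_diff)
  then show ?thesis using Phi_lin[of I "real (I - 1)" w2 0 w2 y] by simp
qed
lemma W_nn: "Phi I wW y \<ge> 0" using W_ge_w2 w2_nn by linarith
lemma B_le1: "Phi I wB y \<le> 1" using B_eq Phi_nn[OF S, of w0] by (auto simp: w0_def)
lemma L_le: "Phi I wL y \<le> real I"
proof -
  have "Phi I wL y \<le> Phi I (\<lambda>p. real I * 1 + 0 * w0 p) y"
    by (rule Phi_mono[OF S]) (auto simp: wL_def idx_def)
  then show ?thesis using Phi_lin[of I "real I" "\<lambda>p. 1" 0 w0 y] simplex_one[OF S] by simp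
qed

lemma dL_le:
  assumes I: "2 \<le> I" and lam: "lam > 0" and d: "real d > 0"
  shows "dPhi lam d I wL y \<le> lam - Phi I wB y"
  using dPhi_L[OF I, of lam d y] arrivals_le[where y=y and I=I, OF nnS lam d I] by linarith

lemma d0_le:
  assumes I: "2 \<le> I" and lam: "lam > 0"
  shows "dPhi lam d I w0 y \<le> Phi I w1 y"
proof -
  have "(\<Sum>q\<in>rhoF I. if fst q = 0 then rho lam d I (snd q - 1) (fst q) (snd q) y else 0) \<ge> 0"
    using rho_nn[where y=y and I=I, OF nnS lam] by (intro sum_nonneg) auto
  moreover have "Rf lam d I 0 y \<le> lam" using Rf_le[where y=y and I=I, OF nnS lam] by blast
  ultimately show ?thesis using dPhi_0[OF I, of lam d y] by linarith
qed

lemma P2_drift: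
  assumes I: "2 \<le> I" and lam: "lam > 0" and P2: "real d * Phi I w0 y \<ge> 1"
  shows "dPhi lam d I w0 y = Phi I w1 y - lam" "dPhi lam d I wL y = lam - Phi I wB y"
proof -
  have P2': "real d * xrow I y 0 \<ge> 1" using P2 Phi_w0 by simp
  have z: "\<And>k. Rf lam d I k y = 0" "\<And>k. 1 \<le> k \<Longrightarrow> Gf lam d I k y = 0" "\<And>k a b. rho lam d I k a b y = 0"
    using P2_zero[where y=y and I=I, OF nnS P2'] lam by auto
  have zz: "(\<Sum>q\<in>rhoF I. if fst q = 0 then rho lam d I (snd q - 1) (fst q) (snd q) y else 0) = 0"
    by (intro sum.neutral ballI) (simp add: z(3))
  show "dPhi lam d I w0 y = Phi I w1 y - lam" using dPhi_0[OF I, of lam d y] zz by (simp add: z)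
  show "dPhi lam d I wL y = lam - Phi I wB y" using dPhi_L[OF I, of lam d y] by (simp add: z)
qed

end


lemma barrier:
  assumes ac: "\<And>T. s \<le> T \<Longrightarrow> abs_cont_on_interval F s T" and Fs: "F s \<ge> c"
    and ae: "AE t in lborel. s < t \<and> F t < c \<longrightarrow> (\<exists>D. (F has_real_derivative D) (at t) \<and> D \<ge> 0)"
    and t1: "t1 \<ge> s"
  shows "F t1 \<ge> c"
proof (rule ccontr)
  assume "\<not> F t1 \<ge> c"
  then have Ft1: "F t1 < c" by simp
  have cont: "continuous_on {s..t1} F" using ac_continuous[OF ac[OF t1]] .
  define S where "S = {s..t1} \<inter> F -` {c..}"
  have clS: "closed S" unfolding S_def by (rule continuous_closed_preimage[OF cont]) auto
  have sS: "s \<in> S" unfolding S_def using Fs t1 by auto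
  have bdd: "bdd_above S" unfolding S_def by auto
  define t0 where "t0 = Sup S"
  have t0S: "t0 \<in> S" unfolding t0_def using closed_contains_Sup[OF _ bdd clS] sS by blast
  then have t0: "s \<le> t0" "t0 \<le> t1" "F t0 \<ge> c" unfolding S_def by auto
  have above: "F \<tau> < c" if "\<tau> \<in> {t0<..t1}" for \<tau>
  proof (rule ccontr)
    assume "\<not> F \<tau> < c"
    then have "\<tau> \<in> S" unfolding S_def using that t0 by auto
    then have "\<tau> \<le> t0" unfolding t0_def using bdd by (simp add: cSup_upper)
    then show False using that by simp
  qed
  have "t0 \<noteq> t1" using t0 Ft1 by auto
  then have t01: "t0 \<le> t1" using t0 by simp
  have acm: "abs_cont_on_interval (\<lambda>t. - F t) t0 t1"
    using ac_scale[OF ac_sub[OF ac[OF t1] t0(1) order_refl], of "-1"] by simp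
  have aem: "AE t in lborel. t \<in> {t0<..<t1} \<longrightarrow> (\<exists>D. ((\<lambda>t. - F t) has_real_derivative D) (at t) \<and> D \<le> 0)"
    using ae
  proof (rule AE_mp, intro AE_I2 impI)
    fix t assume h: "s < t \<and> F t < c \<longrightarrow> (\<exists>D. (F has_real_derivative D) (at t) \<and> D \<ge> 0)"
      and t: "t \<in> {t0<..<t1}"
    then have "s < t" "F t < c" using t0 above[of t] by auto
    then obtain D where D: "(F has_real_derivative D) (at t)" "D \<ge> 0" using h by blast
    then show "\<exists>D. ((\<lambda>t. - F t) has_real_derivative D) (at t) \<and> D \<le> 0"
      by (intro exI[of _ "- D"]) (auto intro: DERIV_minus)
  qed
  have "- F t1 \<le> - F t0" by (rule mono_int[OF acm t01 aem])
  then show False using t0 Ft1 by simp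
qed

lemma cont_induct:
  assumes ac: "\<And>T. s \<le> T \<Longrightarrow> abs_cont_on_interval F s T" and Fs: "F s < c" and c': "c' < c"
    and step: "\<And>T. s \<le> T \<Longrightarrow> (\<forall>t\<in>{s..T}. F t \<le> c) \<Longrightarrow> F T \<le> c'"
    and t2: "t2 \<ge> s"
  shows "F t2 \<le> c'"
proof (cases "\<forall>t\<in>{s..t2}. F t \<le> c")
  case True
  then show ?thesis using step t2 by blast
next
  case False
  then obtain t3 where t3: "t3 \<in> {s..t2}" "F t3 > c" by (auto simp: not_le)
  have cont: "continuous_on {s..t2} F" using ac_continuous[OF ac[OF t2]] .
  define S where "S = {s..t2} \<inter> F -` {c..}"
  have clS: "closed S" unfolding S_def by (rule continuous_closed_preimage[OF cont]) auto
  have t3S: "t3 \<in> S" unfolding S_def using t3 by auto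
  have bdd: "bdd_below S" unfolding S_def by auto
  define t0 where "t0 = Inf S"
  have t0S: "t0 \<in> S" unfolding t0_def using closed_contains_Inf[OF _ bdd clS] t3S by blast
  then have t0: "s \<le> t0" "t0 \<le> t2" "F t0 \<ge> c" unfolding S_def by auto
  have below: "F \<tau> < c" if "\<tau> \<in> {s..<t0}" for \<tau>
  proof (rule ccontr)
    assume "\<not> F \<tau> < c"
    then have "\<tau> \<in> S" unfolding S_def using that t0 by auto
    then have "t0 \<le> \<tau>" unfolding t0_def using bdd by (simp add: cInf_lower)
    then show False using that by simp
  qed
  have Ft0: "F t0 \<le> c"
  proof (rule ccontr)
    assume "\<not> F t0 \<le> c"
    then have gt: "F t0 > c" by simp
    have "continuous_on {s..t0} F" using continuous_on_subset[OF cont] t0 by auto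
    then obtain \<tau> where \<tau>: "\<tau> \<ge> s" "\<tau> \<le> t0" "F \<tau> = c"
      using IVT'[of F s c t0] Fs gt t0 by auto
    then have "\<tau> \<noteq> t0" using gt by auto
    then show False using below[of \<tau>] \<tau> by auto
  qed
  have "\<forall>t\<in>{s..t0}. F t \<le> c"
  proof
    fix t assume "t \<in> {s..t0}"
    then show "F t \<le> c" using below[of t] Ft0 by (cases "t = t0") auto
  qed
  then have "F t0 \<le> c'" using step t0 by blast
  then show ?thesis using c' t0 by simp
qed

lemma mono_rate:
  assumes ac: "abs_cont_on_interval F s T" and sT: "s \<le> T"
    and ae: "AE t in lborel. t \<in> {s<..<T} \<longrightarrow> (\<exists>D. (F has_real_derivative D) (at t) \<and> D \<le> - c0)"
  shows "F T \<le> F s - c0 * (T - s)"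
proof -
  have lip: "abs_cont_on_interval (\<lambda>t. c0 * t) s T"
  proof (rule ac_lipschitz[of "\<bar>c0\<bar>"])
    show "\<bar>c0\<bar> \<ge> 0" by simp
    fix u v assume "s \<le> u" "u \<le> v" "v \<le> T"
    then show "\<bar>c0 * v - c0 * u\<bar> \<le> \<bar>c0\<bar> * (v - u)" by (simp add: abs_mult flip: right_diff_distrib)
  qed
  have acG: "abs_cont_on_interval (\<lambda>t. F t + c0 * t) s T" by (rule ac_add[OF ac lip])
  have aeG: "AE t in lborel. t \<in> {s<..<T} \<longrightarrow> (\<exists>D. ((\<lambda>t. F t + c0 * t) has_real_derivative D) (at t) \<and> D \<le> 0)"
    using ae
  proof (rule AE_mp, intro AE_I2 impI)
    fix t assume h: "t \<in> {s<..<T} \<longrightarrow> (\<exists>D. (F has_real_derivative D) (at t) \<and> D \<le> - c0)"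
      and t: "t \<in> {s<..<T}"
    then obtain D where D: "(F has_real_derivative D) (at t)" "D \<le> - c0" by blast
    have "((\<lambda>t. F t + c0 * t) has_real_derivative D + c0) (at t)"
      by (auto intro!: derivative_eq_intros D(1))
    then show "\<exists>D. ((\<lambda>t. F t + c0 * t) has_real_derivative D) (at t) \<and> D \<le> 0"
      using D(2) by (intro exI[of _ "D + c0"]) auto
  qed
  have "F T + c0 * T \<le> F s + c0 * s" by (rule mono_int[OF acG sT aeG])
  then show ?thesis by (simp add: algebra_simps)
qed


locale fl =
  fixes lam :: real and d I :: nat and x :: "real \<Rightarrow> nat \<Rightarrow> nat \<Rightarrow> real"
  assumes lam0: "0 < lam" and d2: "2 \<le> d" and I2: "2 \<le> I" and lamd: "lam < 1 - 1 / real d"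
    and fl: "fluid_solution lam d I x"
begin

lemma xS: "0 \<le> t \<Longrightarrow> x t \<in> simplexS I" using fl unfolding fluid_solution_def by blast

lemma coord_ac: "(i, j) \<in> idx I \<Longrightarrow> 0 \<le> s \<Longrightarrow> s \<le> T \<Longrightarrow> abs_cont_on_interval (\<lambda>t. x t i j) s T"
  using fl unfolding fluid_solution_def by (meson ac_sub order_refl order_trans)

lemma Phi_ac: "0 \<le> s \<Longrightarrow> s \<le> T \<Longrightarrow> abs_cont_on_interval (\<lambda>t. Phi I w (x t)) s T"
  unfolding Phi_def by (intro ac_sum ac_scale) (auto intro: coord_ac)

lemma der_ae: "AE t in lborel. 0 \<le> t \<longrightarrow> (\<forall>i j. (i, j) \<in> idx I \<longrightarrow>
        ((\<lambda>s. x s i j) has_real_derivative drift lam d I (x t) i j) (at t))"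
  using fl unfolding fluid_solution_def by blast

lemma Phi_der:
  assumes "\<forall>i j. (i, j) \<in> idx I \<longrightarrow> ((\<lambda>s. x s i j) has_real_derivative drift lam d I (x t) i j) (at t)"
  shows "((\<lambda>s. Phi I w (x s)) has_real_derivative dPhi lam d I w (x t)) (at t)"
  unfolding Phi_def dPhi_def using assms
  by (intro DERIV_sum DERIV_cmult) (auto simp: split_beta)

definition "\<delta> = 1 - 1 / real d - lam"

lemma dpos: "\<delta> > 0" using lamd unfolding \<delta>_def by simp
lemma dreal: "real d > 0" using d2 by simp

lemma P2_state: "y \<in> simplexS I \<Longrightarrow> Phi I wB y \<le> lam + \<delta> \<Longrightarrow> real d * Phi I w0 y \<ge> 1"
proof -
  assume S: "y \<in> simplexS I" and B: "Phi I wB y \<le> lam + \<delta>"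
  have "Phi I w0 y \<ge> 1 / real d" using B_eq[OF S] B unfolding \<delta>_def by simp
  then have "real d * Phi I w0 y \<ge> real d * (1 / real d)" using dreal by (intro mult_left_mono) auto
  then show ?thesis using dreal by simp
qed

lemma dB_eq: "dPhi lam d I wB y = - dPhi lam d I w0 y"
proof -
  have "dPhi lam d I wB y = dPhi lam d I (\<lambda>p. 1 * 1 + (-1) * w0 p) y"
    by (rule dPhi_cong) (simp add: wB_def w0_def)
  also have "\<dots> = 1 * dPhi lam d I (\<lambda>p. 1) y + (-1) * dPhi lam d I w0 y" by (rule dPhi_lin)
  finally show ?thesis using dPhi_one[OF I2] by simp
qed

lemma dW_eq: "dPhi lam d I wW y = dPhi lam d I wL y - dPhi lam d I wB y"
proof -
  have "dPhi lam d I wW y = dPhi lam d I (\<lambda>p. 1 * wL p + (-1) * wB p) y"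
    by (rule dPhi_cong) (simp add: wW_def wL_def)
  also have "\<dots> = 1 * dPhi lam d I wL y + (-1) * dPhi lam d I wB y" by (rule dPhi_lin)
  finally show ?thesis by simp
qed

lemma P2_facts:
  assumes S: "y \<in> simplexS I" and B: "Phi I wB y \<le> lam + \<delta>"
  shows "dPhi lam d I wB y = lam - Phi I w1 y" "dPhi lam d I wL y = lam - Phi I wB y"
    "dPhi lam d I wW y = - Phi I w2 y"
proof -
  have P2: "real d * Phi I w0 y \<ge> 1" by (rule P2_state[OF S B])
  show 1: "dPhi lam d I wB y = lam - Phi I w1 y" using P2_drift(1)[OF S I2 lam0 P2] dB_eq by simp
  show 2: "dPhi lam d I wL y = lam - Phi I wB y" using P2_drift(2)[OF S I2 lam0 P2] .
  show "dPhi lam d I wW y = - Phi I w2 y" using dW_eq 1 2 B_split[OF S] by simp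
qed

lemma phase0:
  assumes eps: "\<epsilon> > 0"
  shows "\<exists>t0\<ge>0. \<forall>t\<ge>t0. Phi I wB (x t) \<ge> lam - \<epsilon>"
proof -
  have keyD: "dPhi lam d I wB (x t) \<ge> lam - Phi I wB (x t)" if t: "0 \<le> t" "Phi I wB (x t) < lam" for t
  proof -
    have S: "x t \<in> simplexS I" using xS t by simp
    have "Phi I wB (x t) \<le> lam + \<delta>" using t dpos by simp
    then have "dPhi lam d I wB (x t) = lam - Phi I w1 (x t)" using P2_facts[OF S] by simp
    then show ?thesis using B_split[OF S] w2_nn[OF S] by simp
  qed
  define T where "T = 2 / \<epsilon>"
  have T: "T \<ge> 0" "\<epsilon> * T = 2" using eps unfolding T_def by auto
  have "\<exists>t0\<in>{0..T}. Phi I wB (x t0) \<ge> lam - \<epsilon>"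
  proof (rule ccontr)
    assume "\<not> (\<exists>t0\<in>{0..T}. Phi I wB (x t0) \<ge> lam - \<epsilon>)"
    then have below: "\<forall>t\<in>{0..T}. Phi I wB (x t) < lam - \<epsilon>" by (auto simp: not_le)
    have ac: "abs_cont_on_interval (\<lambda>t. - Phi I wB (x t)) 0 T"
      using ac_scale[OF Phi_ac[of 0 T wB], of "-1"] T by simp
    have ae: "AE t in lborel. t \<in> {0<..<T} \<longrightarrow> (\<exists>D. ((\<lambda>t. - Phi I wB (x t)) has_real_derivative D) (at t) \<and> D \<le> - \<epsilon>)"
      using der_ae
    proof (rule AE_mp, intro AE_I2 impI)
      fix t assume h: "0 \<le> t \<longrightarrow> (\<forall>i j. (i, j) \<in> idx I \<longrightarrow> ((\<lambda>s. x s i j) has_real_derivative drift lam d I (x t) i j) (at t))"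
        and t: "t \<in> {0<..<T}"
      have der: "((\<lambda>s. Phi I wB (x s)) has_real_derivative dPhi lam d I wB (x t)) (at t)"
        using Phi_der h t by simp
      have "Phi I wB (x t) < lam - \<epsilon>" using below t by auto
      then have "dPhi lam d I wB (x t) \<ge> \<epsilon>" using keyD[of t] t eps by auto
      then show "\<exists>D. ((\<lambda>t. - Phi I wB (x t)) has_real_derivative D) (at t) \<and> D \<le> - \<epsilon>"
        using DERIV_minus[OF der] by (intro exI[of _ "- dPhi lam d I wB (x t)"]) auto
    qed
    have "- Phi I wB (x T) \<le> - Phi I wB (x 0) - \<epsilon> * (T - 0)" by (rule mono_rate[OF ac T(1) ae])
    moreover have "Phi I wB (x 0) \<ge> 0" using wB_nn[OF xS] by simp
    moreover have "Phi I wB (x T) \<le> 1" using B_le1[OF xS] T by simp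
    ultimately show False using T by simp
  qed
  then obtain t0 where t0: "t0 \<in> {0..T}" "Phi I wB (x t0) \<ge> lam - \<epsilon>" by blast
  show ?thesis
  proof (intro exI[of _ t0] conjI allI impI)
    show "0 \<le> t0" using t0 by simp
    fix t assume tt: "t0 \<le> t"
    show "Phi I wB (x t) \<ge> lam - \<epsilon>"
    proof (rule barrier[of t0 "\<lambda>t. Phi I wB (x t)" "lam - \<epsilon>" t])
      show "\<And>T. t0 \<le> T \<Longrightarrow> abs_cont_on_interval (\<lambda>t. Phi I wB (x t)) t0 T" using Phi_ac t0 by auto
      show "Phi I wB (x t0) \<ge> lam - \<epsilon>" using t0 by simp
      show "t0 \<le> t" using tt .
      show "AE t in lborel. t0 < t \<and> Phi I wB (x t) < lam - \<epsilon> \<longrightarrow>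
          (\<exists>D. ((\<lambda>t. Phi I wB (x t)) has_real_derivative D) (at t) \<and> D \<ge> 0)"
        using der_ae
      proof (rule AE_mp, intro AE_I2 impI)
        fix t assume h: "0 \<le> t \<longrightarrow> (\<forall>i j. (i, j) \<in> idx I \<longrightarrow> ((\<lambda>s. x s i j) has_real_derivative drift lam d I (x t) i j) (at t))"
          and t: "t0 < t \<and> Phi I wB (x t) < lam - \<epsilon>"
        have t0': "0 \<le> t" using t t0 by auto
        have der: "((\<lambda>s. Phi I wB (x s)) has_real_derivative dPhi lam d I wB (x t)) (at t)"
          using Phi_der h t0' by simp
        have "dPhi lam d I wB (x t) \<ge> 0" using keyD[of t] t t0' eps by auto
        then show "\<exists>D. ((\<lambda>t. Phi I wB (x t)) has_real_derivative D) (at t) \<and> D \<ge> 0"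
          using der by blast
      qed
    qed
  qed
qed


definition "kap = \<delta> / (4 * lam)"
definition "eps0 = kap * \<delta> / (6 * real (I - 1))"

lemma kap_pos: "kap > 0" unfolding kap_def using dpos lam0 by simp
lemma eps0_pos: "eps0 > 0" unfolding eps0_def using kap_pos dpos I2 by simp

lemma dPsi_bound:
  assumes S: "y \<in> simplexS I" and Bl: "Phi I wB y \<ge> lam - eps0"
    and notK: "\<not> (Phi I wW y \<le> \<delta> / 3 \<and> Phi I wB y \<le> lam + \<delta> / 2)"
  shows "dPhi lam d I (\<lambda>p. 1 * wL p + kap * wW p) y \<le> - min (\<delta> / 4) eps0"
proof -
  have dPsi: "dPhi lam d I (\<lambda>p. 1 * wL p + kap * wW p) y = dPhi lam d I wL y + kap * dPhi lam d I wW y"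
    using dPhi_lin[of lam d I 1 wL kap wW y] by simp
  show ?thesis
  proof (cases "Phi I wB y > lam + \<delta> / 2")
    case True
    have dL: "dPhi lam d I wL y \<le> lam - Phi I wB y" by (rule dL_le[OF S I2 lam0 dreal])
    have d0: "dPhi lam d I w0 y \<le> Phi I w1 y" by (rule d0_le[OF S I2 lam0])
    have r1: "Phi I w1 y \<le> Phi I wB y" using B_split[OF S] w2_nn[OF S] by simp
    have dW: "dPhi lam d I wW y \<le> lam" using dW_eq dB_eq dL d0 r1 by simp
    have "kap * dPhi lam d I wW y \<le> kap * lam" using dW kap_pos by (simp add: mult_left_mono)
    also have "kap * lam = \<delta> / 4" unfolding kap_def using lam0 by simp
    finally have "dPhi lam d I (\<lambda>p. 1 * wL p + kap * wW p) y \<le> - (\<delta> / 4)"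
      using dPsi dL True by simp
    then show ?thesis by simp
  next
    case False
    then have B2: "Phi I wB y \<le> lam + \<delta> / 2" by simp
    then have W3: "Phi I wW y > \<delta> / 3" using notK by simp
    have BP: "Phi I wB y \<le> lam + \<delta>" using B2 dpos by simp
    have dL: "dPhi lam d I wL y = lam - Phi I wB y" using P2_facts(2)[OF S BP] .
    have dW: "dPhi lam d I wW y = - Phi I w2 y" using P2_facts(3)[OF S BP] .
    have I1: "real (I - 1) > 0" using I2 by simp
    have "Phi I wW y \<le> real (I - 1) * Phi I w2 y" by (rule W_le_w2[OF S])
    then have "\<delta> / 3 < real (I - 1) * Phi I w2 y" using W3 by simp
    then have r2: "Phi I w2 y > \<delta> / (3 * real (I - 1))" using I1 by (simp add: field_simps)
    have "kap * Phi I w2 y \<ge> kap * (\<delta> / (3 * real (I - 1)))"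
      using r2 kap_pos by (intro mult_left_mono) auto
    moreover have "kap * (\<delta> / (3 * real (I - 1))) = 2 * eps0" unfolding eps0_def using I1 by (simp add: field_simps)
    ultimately have "dPhi lam d I (\<lambda>p. 1 * wL p + kap * wW p) y \<le> eps0 - 2 * eps0"
      using dPsi dL dW Bl by simp
    then show ?thesis by simp
  qed
qed

lemma phase1:
  assumes t0: "0 \<le> t0" and Bl: "\<forall>t\<ge>t0. Phi I wB (x t) \<ge> lam - eps0"
  shows "\<exists>t1\<ge>t0. Phi I wW (x t1) \<le> \<delta> / 3 \<and> Phi I wB (x t1) \<le> lam + \<delta> / 2"
proof (rule ccontr)
  assume nK: "\<not> (\<exists>t1\<ge>t0. Phi I wW (x t1) \<le> \<delta> / 3 \<and> Phi I wB (x t1) \<le> lam + \<delta> / 2)"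
  define psi where "psi = (\<lambda>p. 1 * wL p + kap * wW p)"
  define c0 where "c0 = min (\<delta> / 4) eps0"
  have c0: "c0 > 0" unfolding c0_def using dpos eps0_pos by simp
  define T where "T = t0 + (Phi I psi (x t0) + 1) / c0"
  have psinn: "Phi I psi (x t) \<ge> 0" if "0 \<le> t" for t
  proof -
    have "Phi I psi (x t) = 1 * Phi I wL (x t) + kap * Phi I wW (x t)" unfolding psi_def by (rule Phi_lin)
    then show ?thesis using wL_nn[OF xS[OF that]] W_nn[OF xS[OF that]] kap_pos by simp
  qed
  have T: "t0 \<le> T" unfolding T_def using psinn[OF t0] c0 by simp
  have ac: "abs_cont_on_interval (\<lambda>t. Phi I psi (x t)) t0 T" using Phi_ac t0 T by simp
  have ae: "AE t in lborel. t \<in> {t0<..<T} \<longrightarrow> (\<exists>D. ((\<lambda>t. Phi I psi (x t)) has_real_derivative D) (at t) \<and> D \<le> - c0)"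
    using der_ae
  proof (rule AE_mp, intro AE_I2 impI)
    fix t assume h: "0 \<le> t \<longrightarrow> (\<forall>i j. (i, j) \<in> idx I \<longrightarrow> ((\<lambda>s. x s i j) has_real_derivative drift lam d I (x t) i j) (at t))"
      and t: "t \<in> {t0<..<T}"
    have t0': "0 \<le> t" using t t0 by auto
    have der: "((\<lambda>s. Phi I psi (x s)) has_real_derivative dPhi lam d I psi (x t)) (at t)"
      using Phi_der h t0' by simp
    have "dPhi lam d I psi (x t) \<le> - c0" unfolding psi_def c0_def
      by (rule dPsi_bound[OF xS[OF t0']]) (use Bl nK t in auto)
    then show "\<exists>D. ((\<lambda>t. Phi I psi (x t)) has_real_derivative D) (at t) \<and> D \<le> - c0" using der by blast
  qed
  have "Phi I psi (x T) \<le> Phi I psi (x t0) - c0 * (T - t0)" by (rule mono_rate[OF ac T ae])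
  also have "c0 * (T - t0) = Phi I psi (x t0) + 1" unfolding T_def using c0 by simp
  finally show False using psinn[of T] t0 T by simp
qed

lemma phase2:
  assumes t1: "0 \<le> t1" and W1: "Phi I wW (x t1) \<le> \<delta> / 3" and B1: "Phi I wB (x t1) \<le> lam + \<delta> / 2"
  shows "\<forall>t\<ge>t1. Phi I wB (x t) \<le> lam + \<delta> / 2"
proof (intro allI impI)
  fix t assume tt: "t1 \<le> t"
  show "Phi I wB (x t) \<le> lam + \<delta> / 2"
  proof (rule cont_induct[of t1 "\<lambda>t. Phi I wB (x t)" "lam + 3 * \<delta> / 4" "lam + \<delta> / 2" t])
    show "\<And>T. t1 \<le> T \<Longrightarrow> abs_cont_on_interval (\<lambda>t. Phi I wB (x t)) t1 T" using Phi_ac t1 by auto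
    show "Phi I wB (x t1) < lam + 3 * \<delta> / 4" using B1 dpos by simp
    show "lam + \<delta> / 2 < lam + 3 * \<delta> / 4" using dpos by simp
    show "t1 \<le> t" using tt .
    fix T assume T: "t1 \<le> T" and below: "\<forall>s\<in>{t1..T}. Phi I wB (x s) \<le> lam + 3 * \<delta> / 4"
    have P2at: "Phi I wB (x s) \<le> lam + \<delta>" if "s \<in> {t1..T}" for s using below that dpos by force
    have Wle: "Phi I wW (x \<tau>) \<le> \<delta> / 3" if \<tau>: "\<tau> \<in> {t1..T}" for \<tau>
    proof -
      have ac: "abs_cont_on_interval (\<lambda>t. Phi I wW (x t)) t1 \<tau>" using Phi_ac t1 \<tau> by simp
      have ae: "AE t in lborel. t \<in> {t1<..<\<tau>} \<longrightarrow> (\<exists>D. ((\<lambda>t. Phi I wW (x t)) has_real_derivative D) (at t) \<and> D \<le> 0)"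
        using der_ae
      proof (rule AE_mp, intro AE_I2 impI)
        fix t assume h: "0 \<le> t \<longrightarrow> (\<forall>i j. (i, j) \<in> idx I \<longrightarrow> ((\<lambda>s. x s i j) has_real_derivative drift lam d I (x t) i j) (at t))"
          and t: "t \<in> {t1<..<\<tau>}"
        have t0': "0 \<le> t" using t t1 by auto
        have der: "((\<lambda>s. Phi I wW (x s)) has_real_derivative dPhi lam d I wW (x t)) (at t)"
          using Phi_der h t0' by simp
        have "t \<in> {t1..T}" using t \<tau> by auto
        then have "dPhi lam d I wW (x t) = - Phi I w2 (x t)" using P2_facts(3)[OF xS[OF t0'] P2at] by simp
        then have "dPhi lam d I wW (x t) \<le> 0" using w2_nn[OF xS[OF t0']] by simp
        then show "\<exists>D. ((\<lambda>t. Phi I wW (x t)) has_real_derivative D) (at t) \<and> D \<le> 0" using der by blast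
      qed
      have "Phi I wW (x \<tau>) \<le> Phi I wW (x t1)" by (rule mono_int[OF ac _ ae]) (use \<tau> in auto)
      then show ?thesis using W1 by simp
    qed
    define F where "F t = Phi I wB (x t) - (lam + \<delta> / 3)" for t
    have acF: "abs_cont_on_interval F t1 T" unfolding F_def using Phi_ac[of t1 T wB] ac_const t1 T
      by (intro ac_diff) auto
    have aeF: "AE t in lborel. t \<in> {t1<..<T} \<longrightarrow> (\<exists>D. (F has_real_derivative D) (at t) \<and> D \<le> - 1 * F t + 0 * exp (- (1/2) * (t - t1)))"
      using der_ae
    proof (rule AE_mp, intro AE_I2 impI)
      fix t assume h: "0 \<le> t \<longrightarrow> (\<forall>i j. (i, j) \<in> idx I \<longrightarrow> ((\<lambda>s. x s i j) has_real_derivative drift lam d I (x t) i j) (at t))"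
        and t: "t \<in> {t1<..<T}"
      have t0': "0 \<le> t" using t t1 by auto
      have tT: "t \<in> {t1..T}" using t by auto
      have der: "((\<lambda>s. Phi I wB (x s)) has_real_derivative dPhi lam d I wB (x t)) (at t)"
        using Phi_der h t0' by simp
      then have derF: "(F has_real_derivative dPhi lam d I wB (x t)) (at t)"
        unfolding F_def using DERIV_diff[OF der DERIV_const] by simp
      have S: "x t \<in> simplexS I" using xS t0' by simp
      have e: "dPhi lam d I wB (x t) = lam - Phi I w1 (x t)" using P2_facts(1)[OF S P2at[OF tT]] .
      have "Phi I w2 (x t) \<le> \<delta> / 3" using W_ge_w2[OF S] Wle[OF tT] by simp
      then have "dPhi lam d I wB (x t) \<le> - 1 * F t + 0 * exp (- (1/2) * (t - t1))"
        unfolding F_def e using B_split[OF S] by simp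
      then show "\<exists>D. (F has_real_derivative D) (at t) \<and> D \<le> - 1 * F t + 0 * exp (- (1/2) * (t - t1))"
        using derF by blast
    qed
    have "F T \<le> (max (F t1) 0 + 0 / (1 - 1/2)) * exp (- (1/2) * (T - t1))"
      by (rule G2_int[OF acF T _ _ _ _ aeF]) auto
    also have "\<dots> = max (F t1) 0 * exp (- (1/2) * (T - t1))" by simp
    also have "\<dots> \<le> max (F t1) 0 * 1"
      using T by (intro mult_left_mono) auto
    also have "\<dots> \<le> \<delta> / 6" unfolding F_def using B1 dpos by (simp add: max_def)
    finally show "Phi I wB (x T) \<le> lam + \<delta> / 2" unfolding F_def by simp
  qed
qed

end


definition expdecay :: "(real \<Rightarrow> real) \<Rightarrow> real \<Rightarrow> bool" where
  "expdecay f s \<longleftrightarrow> (\<exists>C \<beta>. \<beta> > 0 \<and> (\<forall>t\<ge>s. \<bar>f t\<bar> \<le> C * exp (- \<beta> * (t - s))))"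

lemma expdecayE:
  assumes "expdecay f s"
  obtains C \<beta> where "\<beta> > 0" "C \<ge> 0" "\<And>t. t \<ge> s \<Longrightarrow> \<bar>f t\<bar> \<le> C * exp (- \<beta> * (t - s))"
proof -
  obtain C \<beta> where h: "\<beta> > 0" "\<forall>t\<ge>s. \<bar>f t\<bar> \<le> C * exp (- \<beta> * (t - s))"
    using assms unfolding expdecay_def by blast
  have "\<bar>f s\<bar> \<le> C" using h(2) by auto
  then have "C \<ge> 0" by linarith
  then show ?thesis using that h by blast
qed

lemma expdecay_add:
  assumes "expdecay f s" "expdecay g s"
  shows "expdecay (\<lambda>t. f t + g t) s"
proof -
  obtain C1 b1 where 1: "b1 > 0" "C1 \<ge> 0" "\<And>t. t \<ge> s \<Longrightarrow> \<bar>f t\<bar> \<le> C1 * exp (- b1 * (t - s))"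
    using expdecayE[OF assms(1)] by blast
  obtain C2 b2 where 2: "b2 > 0" "C2 \<ge> 0" "\<And>t. t \<ge> s \<Longrightarrow> \<bar>g t\<bar> \<le> C2 * exp (- b2 * (t - s))"
    using expdecayE[OF assms(2)] by blast
  show ?thesis unfolding expdecay_def
  proof (rule exI[of _ "C1 + C2"], rule exI[of _ "min b1 b2"], intro conjI allI impI)
    show "min b1 b2 > 0" using 1 2 by simp
    fix t assume t: "t \<ge> s"
    have e1: "exp (- b1 * (t - s)) \<le> exp (- min b1 b2 * (t - s))" using t by (simp add: mult_right_mono)
    have e2: "exp (- b2 * (t - s)) \<le> exp (- min b1 b2 * (t - s))" using t by (simp add: mult_right_mono)
    have "\<bar>f t + g t\<bar> \<le> C1 * exp (- b1 * (t - s)) + C2 * exp (- b2 * (t - s))"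
      using 1(3)[OF t] 2(3)[OF t] by linarith
    also have "\<dots> \<le> C1 * exp (- min b1 b2 * (t - s)) + C2 * exp (- min b1 b2 * (t - s))"
      using e1 e2 1(2) 2(2) by (intro add_mono mult_left_mono) auto
    finally show "\<bar>f t + g t\<bar> \<le> (C1 + C2) * exp (- min b1 b2 * (t - s))" by (simp add: algebra_simps)
  qed
qed

lemma expdecay_cmult:
  assumes "expdecay f s"
  shows "expdecay (\<lambda>t. c * f t) s"
proof -
  obtain C b where 1: "b > 0" "C \<ge> 0" "\<And>t. t \<ge> s \<Longrightarrow> \<bar>f t\<bar> \<le> C * exp (- b * (t - s))"
    using expdecayE[OF assms] by blast
  show ?thesis unfolding expdecay_def
  proof (rule exI[of _ "\<bar>c\<bar> * C"], rule exI[of _ b], intro conjI allI impI)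
    show "b > 0" using 1 by simp
    fix t assume t: "t \<ge> s"
    show "\<bar>c * f t\<bar> \<le> \<bar>c\<bar> * C * exp (- b * (t - s))"
      using 1(3)[OF t] by (simp add: abs_mult mult.assoc mult_left_mono)
  qed
qed

lemma expdecay_zero: "expdecay (\<lambda>t. 0) s"
  unfolding expdecay_def by (rule exI[of _ 0], rule exI[of _ 1]) auto

lemma expdecay_abs: "expdecay f s \<Longrightarrow> expdecay (\<lambda>t. \<bar>f t\<bar>) s"
  unfolding expdecay_def by simp

lemma expdecay_sum:
  assumes "finite A" "\<And>p. p \<in> A \<Longrightarrow> expdecay (f p) s"
  shows "expdecay (\<lambda>t. \<Sum>p\<in>A. f p t) s"
  using assms
proof (induction A rule: finite_induct)
  case empty
  then show ?case using expdecay_zero by simp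
next
  case (insert a F)
  then show ?case using expdecay_add[of "f a" s "\<lambda>t. \<Sum>p\<in>F. f p t"] by simp
qed

lemma SL:
  assumes ac: "\<And>T. s \<le> T \<Longrightarrow> abs_cont_on_interval F s T" and a: "a > 0"
    and g: "expdecay g s"
    and ae: "AE t in lborel. s < t \<longrightarrow> (F has_real_derivative (- a * F t + g t)) (at t)"
  shows "expdecay F s"
proof -
  obtain C b where gb: "b > 0" "C \<ge> 0" "\<And>t. t \<ge> s \<Longrightarrow> \<bar>g t\<bar> \<le> C * exp (- b * (t - s))"
    using expdecayE[OF g] by blast
  define b' where "b' = min b (a / 2)"
  have b': "0 < b'" "b' < a" "b' \<le> b" unfolding b'_def using gb a by auto
  have gb': "\<bar>g t\<bar> \<le> C * exp (- b' * (t - s))" if "t \<ge> s" for t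
  proof -
    have "exp (- b * (t - s)) \<le> exp (- b' * (t - s))" using that b' by (simp add: mult_right_mono)
    then show ?thesis using gb(3)[OF that] gb(2) by (meson mult_left_mono order_trans)
  qed
  have up: "F t \<le> (max (F s) 0 + C / (a - b')) * exp (- b' * (t - s))" if t: "t \<ge> s" for t
  proof (rule G2_int[OF ac[OF t] t a b'(1) b'(2) gb(2)])
    show "AE \<tau> in lborel. \<tau> \<in> {s<..<t} \<longrightarrow> (\<exists>D. (F has_real_derivative D) (at \<tau>) \<and> D \<le> - a * F \<tau> + C * exp (- b' * (\<tau> - s)))"
      using ae
    proof (rule AE_mp, intro AE_I2 impI)
      fix \<tau> assume h: "s < \<tau> \<longrightarrow> (F has_real_derivative - a * F \<tau> + g \<tau>) (at \<tau>)" and \<tau>: "\<tau> \<in> {s<..<t}"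
      then show "\<exists>D. (F has_real_derivative D) (at \<tau>) \<and> D \<le> - a * F \<tau> + C * exp (- b' * (\<tau> - s))"
        using gb'[of \<tau>] by (intro exI[of _ "- a * F \<tau> + g \<tau>"]) auto
    qed
  qed
  have lo: "- F t \<le> (max (- F s) 0 + C / (a - b')) * exp (- b' * (t - s))" if t: "t \<ge> s" for t
  proof (rule G2_int[OF _ t a b'(1) b'(2) gb(2)])
    show "abs_cont_on_interval (\<lambda>t. - F t) s t" using ac_scale[OF ac[OF t], of "-1"] by simp
    show "AE \<tau> in lborel. \<tau> \<in> {s<..<t} \<longrightarrow> (\<exists>D. ((\<lambda>t. - F t) has_real_derivative D) (at \<tau>) \<and> D \<le> - a * - F \<tau> + C * exp (- b' * (\<tau> - s)))"
      using ae
    proof (rule AE_mp, intro AE_I2 impI)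
      fix \<tau> assume h: "s < \<tau> \<longrightarrow> (F has_real_derivative - a * F \<tau> + g \<tau>) (at \<tau>)" and \<tau>: "\<tau> \<in> {s<..<t}"
      have dd: "(F has_real_derivative (- a * F \<tau> + g \<tau>)) (at \<tau>)" using h \<tau> by auto
      have "((\<lambda>t. - F t) has_real_derivative - (- a * F \<tau> + g \<tau>)) (at \<tau>)"
        by (rule DERIV_minus[OF dd])
      then show "\<exists>D. ((\<lambda>t. - F t) has_real_derivative D) (at \<tau>) \<and> D \<le> - a * - F \<tau> + C * exp (- b' * (\<tau> - s))"
        using gb'[of \<tau>] \<tau> by (intro exI[of _ "- (- a * F \<tau> + g \<tau>)"]) auto
    qed
  qed
  show ?thesis unfolding expdecay_def
  proof (rule exI[of _ "\<bar>F s\<bar> + C / (a - b')"], rule exI[of _ b'], intro conjI allI impI)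
    show "b' > 0" using b' by simp
    fix t assume t: "t \<ge> s"
    have m1: "max (F s) 0 \<le> \<bar>F s\<bar>" and m2: "max (- F s) 0 \<le> \<bar>F s\<bar>" by auto
    have u1: "(max (F s) 0 + C / (a - b')) * exp (- b' * (t - s)) \<le> (\<bar>F s\<bar> + C / (a - b')) * exp (- b' * (t - s))"
      using m1 by (intro mult_right_mono) auto
    have u2: "(max (- F s) 0 + C / (a - b')) * exp (- b' * (t - s)) \<le> (\<bar>F s\<bar> + C / (a - b')) * exp (- b' * (t - s))"
      using m2 by (intro mult_right_mono) auto
    have A: "F t \<le> (\<bar>F s\<bar> + C / (a - b')) * exp (- b' * (t - s))" by (rule order_trans[OF up[OF t] u1])
    have B: "- F t \<le> (\<bar>F s\<bar> + C / (a - b')) * exp (- b' * (t - s))" by (rule order_trans[OF lo[OF t] u2])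
    show "\<bar>F t\<bar> \<le> (\<bar>F s\<bar> + C / (a - b')) * exp (- b' * (t - s))"
      unfolding abs_le_iff using A B by blast
  qed
qed


context
  fixes y :: "nat \<Rightarrow> nat \<Rightarrow> real" and lam :: real and d I :: nat
  assumes S: "y \<in> simplexS I" and I2: "2 \<le> I" and lam0: "lam > 0" and P2: "real d * Phi I w0 y \<ge> 1"
begin

lemma zs: "Rf lam d I k y = 0" "1 \<le> k \<Longrightarrow> Gf lam d I k y = 0" "rho lam d I k a b y = 0"
proof -
  have P2': "real d * xrow I y 0 \<ge> 1" using P2 Phi_w0 by simp
  have nn: "\<And>i j. 0 \<le> y i j" using simplex_nn[OF S] by blast
  show "Rf lam d I k y = 0" "1 \<le> k \<Longrightarrow> Gf lam d I k y = 0" "rho lam d I k a b y = 0"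
    using P2_zero[where y=y and I=I, OF nn P2'] lam0 by auto
qed

lemma lin_lt: "i < j \<Longrightarrow> drift lam d I y i j = y (i + 1) j - (if i > 0 then y i j else 0) - lam * real d * y i j"
  by (simp add: drift_lt zs)

lemma lin_11: "drift lam d I y 1 1 = - y 1 1 + lam * real d * (\<Sum>k\<in>{1<..I}. y 1 k) + lam"
proof -
  have e: "xrow I y 1 - y 1 1 = (\<Sum>k\<in>{1<..I}. y 1 k)" using xrow_split[of 1 I y] I2 by simp
  have G: "Gf lam d I 1 y = 0" by (rule zs(2)) simp
  show ?thesis unfolding drift_11 zs(1) zs(3) G e by simp
qed

lemma lin_ii: "2 \<le> i \<Longrightarrow> i \<le> I - 1 \<Longrightarrow> drift lam d I y i i = - y i i + lam * real d * (\<Sum>k\<in>{i<..I}. y i k)"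
proof -
  assume i: "2 \<le> i" "i \<le> I - 1"
  have "xrow I y i - y i i = (\<Sum>k\<in>{i<..I}. y i k)" using xrow_split[of i I y] i I2 by simp
  then show ?thesis using i by (simp add: drift_ii zs)
qed

lemma lin_II: "drift lam d I y I I = - y I I"
  using I2 by (simp add: drift_II zs)

end

lemma expdecay_cong: "(\<And>t. t \<ge> s \<Longrightarrow> f t = g t) \<Longrightarrow> expdecay g s \<Longrightarrow> expdecay f s"
  unfolding expdecay_def by auto

definition rk :: "nat \<Rightarrow> nat \<Rightarrow> nat \<Rightarrow> nat" where
  "rk I i j = 2 * (I - i) + (if i = j then 1 else 0)"

context fl
begin

lemma eventually_P2: "\<exists>t1\<ge>0. \<forall>t\<ge>t1. real d * Phi I w0 (x t) \<ge> 1"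
proof -
  obtain t0 where t0: "t0 \<ge> 0" "\<forall>t\<ge>t0. Phi I wB (x t) \<ge> lam - eps0" using phase0[OF eps0_pos] by blast
  obtain t1 where t1: "t1 \<ge> t0" "Phi I wW (x t1) \<le> \<delta> / 3" "Phi I wB (x t1) \<le> lam + \<delta> / 2"
    using phase1[OF t0] by blast
  have B: "\<forall>t\<ge>t1. Phi I wB (x t) \<le> lam + \<delta> / 2" using phase2[of t1] t1 t0 by simp
  show ?thesis
  proof (intro exI[of _ t1] conjI allI impI)
    show "0 \<le> t1" using t0 t1 by simp
    fix t assume t: "t1 \<le> t"
    then have "0 \<le> t" using t0 t1 by simp
    moreover have "Phi I wB (x t) \<le> lam + \<delta>" using B t dpos by force
    ultimately show "real d * Phi I w0 (x t) \<ge> 1" using P2_state xS by blast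
  qed
qed

lemma xstar_vals: "xstar lam d 0 0 = 1 - lam - 1 / real d" "xstar lam d 0 1 = 1 / real d" "xstar lam d 1 1 = lam"
  "(i, j) \<noteq> (0,0) \<Longrightarrow> (i, j) \<noteq> (0,1) \<Longrightarrow> (i, j) \<noteq> (1,1) \<Longrightarrow> xstar lam d i j = 0"
  unfolding xstar_def by auto

lemma coord_decay:
  assumes t1: "t1 \<ge> 0" and P2: "\<forall>t\<ge>t1. real d * Phi I w0 (x t) \<ge> 1"
  shows "(i, j) \<in> idx I \<Longrightarrow> (i, j) \<noteq> (0, 0) \<Longrightarrow> expdecay (\<lambda>t. x t i j - xstar lam d i j) t1"
proof -
  define u where "u i j t = x t i j - xstar lam d i j" for i j t
  have acu: "\<And>T. t1 \<le> T \<Longrightarrow> abs_cont_on_interval (u i j) t1 T" if "(i, j) \<in> idx I" for i j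
    unfolding u_def using coord_ac[OF that t1] by (intro ac_diff ac_const) auto
  have deru: "AE t in lborel. t1 < t \<longrightarrow> (u i j has_real_derivative drift lam d I (x t) i j) (at t)
      \<and> x t \<in> simplexS I \<and> real d * Phi I w0 (x t) \<ge> 1" if "(i, j) \<in> idx I" for i j
    using der_ae
  proof (rule AE_mp, intro AE_I2 impI)
    fix t assume h: "0 \<le> t \<longrightarrow> (\<forall>i j. (i, j) \<in> idx I \<longrightarrow> ((\<lambda>s. x s i j) has_real_derivative drift lam d I (x t) i j) (at t))"
      and t: "t1 < t"
    have t0: "0 \<le> t" using t t1 by simp
    have "((\<lambda>s. x s i j) has_real_derivative drift lam d I (x t) i j) (at t)" using h t0 that by blast
    then have "(u i j has_real_derivative drift lam d I (x t) i j) (at t)"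
      unfolding u_def using DERIV_diff[OF _ DERIV_const] by fastforce
    then show "(u i j has_real_derivative drift lam d I (x t) i j) (at t) \<and> x t \<in> simplexS I \<and> real d * Phi I w0 (x t) \<ge> 1"
      using xS[OF t0] P2 t by auto
  qed
  have dpos': "real d > 0" by (rule dreal)
  have main: "\<forall>i j. (i, j) \<in> idx I \<and> (i, j) \<noteq> (0, 0) \<and> rk I i j = m \<longrightarrow> expdecay (u i j) t1" for m
  proof (induction m rule: less_induct)
    case (less m)
    show ?case
    proof (intro allI impI)
      fix i j assume H: "(i, j) \<in> idx I \<and> (i, j) \<noteq> (0, 0) \<and> rk I i j = m"
      then have ij: "i \<le> j" "j \<le> I" "(i, j) \<noteq> (0, 0)" and m: "rk I i j = m" by auto
      have IH: "expdecay (u i' j') t1" if "(i', j') \<in> idx I" "(i', j') \<noteq> (0, 0)" "rk I i' j' < rk I i j" for i' j'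
        using less.IH[of "rk I i' j'"] that m by blast
      have nz: "\<not> (i = 0 \<and> j = 0)" using ij by auto
      have ijI: "(i, j) \<in> idx I" using ij by simp
      consider (a) "i < j" | (b) "i = j" "1 \<le> i" "i \<le> I - 1" | (c) "i = I" "j = I" using ij I2 nz by linarith
      then show "expdecay (u i j) t1"
      proof cases
        case a
        define a where "a = (if i > 0 then 1 else 0) + lam * real d"
        have apos: "a > 0" unfolding a_def using lam0 dpos' by (simp add: add_pos_nonneg)
        have g: "expdecay (u (i + 1) j) t1"
          by (rule IH) (use a ij I2 in \<open>auto simp: rk_def\<close>)
        have zid: "a * xstar lam d i j = xstar lam d (i + 1) j"
        proof (cases "i = 0")
          case True
          show ?thesis
          proof (cases "j = 1")
            case True2: True
            then show ?thesis using True dpos' unfolding a_def by (simp add: xstar_def)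
          next
            case False
            then show ?thesis using True a unfolding a_def by (simp add: xstar_def)
          qed
        next
          case False
          then show ?thesis using a unfolding a_def by (simp add: xstar_def)
        qed
        show ?thesis
        proof (rule SL[OF acu[OF _] apos g])
          show "(i, j) \<in> idx I" using ij by simp
          show "AE t in lborel. t1 < t \<longrightarrow> (u i j has_real_derivative - a * u i j t + u (i + 1) j t) (at t)"
            using deru[OF ijI]
          proof (rule AE_mp, intro AE_I2 impI)
            fix t assume h: "t1 < t \<longrightarrow> (u i j has_real_derivative drift lam d I (x t) i j) (at t) \<and> x t \<in> simplexS I \<and> 1 \<le> real d * Phi I w0 (x t)"
              and t: "t1 < t"
            then have D: "(u i j has_real_derivative drift lam d I (x t) i j) (at t)" and S: "x t \<in> simplexS I"
              and PP: "1 \<le> real d * Phi I w0 (x t)" by auto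
            have "drift lam d I (x t) i j = x t (i + 1) j - (if i > 0 then x t i j else 0) - lam * real d * x t i j"
              by (rule lin_lt[OF S I2 lam0 PP a])
            also have "\<dots> = - a * u i j t + u (i + 1) j t"
              unfolding u_def a_def using zid[symmetric] unfolding a_def by (auto simp: algebra_simps)
            finally show "(u i j has_real_derivative - a * u i j t + u (i + 1) j t) (at t)" using D by simp
          qed
        qed (use ij in auto)
      next
        case b
        define g where "g t = lam * real d * (\<Sum>k\<in>{i<..I}. u i k t)" for t
        have gd: "expdecay g t1" unfolding g_def
        proof (intro expdecay_cmult expdecay_sum)
          show "finite {i<..I}" by simp
          fix k assume k: "k \<in> {i<..I}"
          show "expdecay (u i k) t1" by (rule IH) (use k b in \<open>auto simp: rk_def\<close>)
        qed
        have zsum: "(\<Sum>k\<in>{i<..I}. xstar lam d i k) = 0"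
          using b by (intro sum.neutral) (auto simp: xstar_def)
        show ?thesis
        proof (rule SL[OF acu[OF _] zero_less_one gd])
          show "(i, j) \<in> idx I" using ij by simp
          show "AE t in lborel. t1 < t \<longrightarrow> (u i j has_real_derivative - 1 * u i j t + g t) (at t)"
            using deru[OF ijI]
          proof (rule AE_mp, intro AE_I2 impI)
            fix t assume h: "t1 < t \<longrightarrow> (u i j has_real_derivative drift lam d I (x t) i j) (at t) \<and> x t \<in> simplexS I \<and> 1 \<le> real d * Phi I w0 (x t)"
              and t: "t1 < t"
            then have D: "(u i j has_real_derivative drift lam d I (x t) i j) (at t)" and S: "x t \<in> simplexS I"
              and PP: "1 \<le> real d * Phi I w0 (x t)" by auto
            have gt: "g t = lam * real d * (\<Sum>k\<in>{i<..I}. x t i k)"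
              unfolding g_def u_def using zsum by (simp add: sum_subtractf)
            have "drift lam d I (x t) i j = - 1 * u i j t + g t"
            proof (cases "i = 1")
              case True
              then show ?thesis using b lin_11[OF S I2 lam0 PP] unfolding gt u_def by (simp add: xstar_def)
            next
              case False
              then have "2 \<le> i" using b by simp
              then show ?thesis using b lin_ii[OF S I2 lam0 PP, of i] unfolding gt u_def by (simp add: xstar_def)
            qed
            then show "(u i j has_real_derivative - 1 * u i j t + g t) (at t)" using D by simp
          qed
        qed (use ij in auto)
      next
        case c
        show ?thesis
        proof (rule SL[OF acu[OF _] zero_less_one expdecay_zero])
          show "(i, j) \<in> idx I" using ij by simp
          show "AE t in lborel. t1 < t \<longrightarrow> (u i j has_real_derivative - 1 * u i j t + 0) (at t)"
            using deru[OF ijI]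
          proof (rule AE_mp, intro AE_I2 impI)
            fix t assume h: "t1 < t \<longrightarrow> (u i j has_real_derivative drift lam d I (x t) i j) (at t) \<and> x t \<in> simplexS I \<and> 1 \<le> real d * Phi I w0 (x t)"
              and t: "t1 < t"
            then have D: "(u i j has_real_derivative drift lam d I (x t) i j) (at t)" and S: "x t \<in> simplexS I"
              and PP: "1 \<le> real d * Phi I w0 (x t)" by auto
            have "drift lam d I (x t) i j = - 1 * u i j t + 0"
              using c lin_II[OF S I2 lam0 PP] I2 unfolding u_def by (simp add: xstar_def)
            then show "(u i j has_real_derivative - 1 * u i j t + 0) (at t)" using D by simp
          qed
        qed (use ij in auto)
      qed
    qed
  qed
  show "(i, j) \<in> idx I \<Longrightarrow> (i, j) \<noteq> (0, 0) \<Longrightarrow> expdecay (\<lambda>t. x t i j - xstar lam d i j) t1"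
    using main[of "rk I i j"] unfolding u_def by blast
qed

end


lemma xstar_sum:
  assumes "1 \<le> I"
  shows "(\<Sum>p\<in>idx I. xstar lam d (fst p) (snd p)) = 1"
proof -
  have "(\<Sum>p\<in>idx I. xstar lam d (fst p) (snd p)) = (\<Sum>p\<in>{(0,0),(0,1),(1,1)}. xstar lam d (fst p) (snd p))"
    by (rule sum.mono_neutral_right) (use assms in \<open>auto simp: xstar_def\<close>)
  also have "\<dots> = 1" by (simp add: xstar_def)
  finally show ?thesis .
qed

theorem theorem3:
  fixes lam :: real and d I :: nat and x :: "real \<Rightarrow> nat \<Rightarrow> nat \<Rightarrow> real"
  assumes "0 < lam" "lam < 1" "d \<ge> 2" "I > 1"
    and "lam < 1 - 1 / real d"
    and "fluid_solution lam d I x"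
  shows "\<exists>\<alpha>>0. \<exists>\<beta>>0. \<forall>t\<ge>0. state_dist I (x t) (xstar lam d) \<le> \<alpha> * exp (- \<beta> * t)"
proof -
  interpret fl lam d I x using assms by unfold_locales auto
  have I2: "2 \<le> I" using assms by simp
  obtain t1 where t1: "t1 \<ge> 0" "\<forall>t\<ge>t1. real d * Phi I w0 (x t) \<ge> 1" using eventually_P2 by blast
  define u where "u p t = x t (fst p) (snd p) - xstar lam d (fst p) (snd p)" for p t
  have sum0: "(\<Sum>p\<in>idx I. u p t) = 0" if "t \<ge> 0" for t
  proof -
    have "(\<Sum>p\<in>idx I. x t (fst p) (snd p)) = 1"
      using simplex_one[OF xS[OF that]] unfolding Phi_def by simp
    then show ?thesis unfolding u_def sum_subtractf using xstar_sum[of I lam d] I2 by simp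
  qed
  have dec: "expdecay (u p) t1" if p: "p \<in> idx I" for p
  proof (cases "p = (0, 0)")
    case False
    obtain i j where ij: "p = (i, j)" by fastforce
    show ?thesis using coord_decay[OF t1, of i j] p False ij unfolding u_def by simp
  next
    case True
    have "expdecay (\<lambda>t. (-1) * (\<Sum>q\<in>idx I - {(0,0)}. u q t)) t1"
    proof (intro expdecay_cmult expdecay_sum)
      show "finite (idx I - {(0, 0)})" by simp
      fix q assume q: "q \<in> idx I - {(0, 0)}"
      obtain i j where ij: "q = (i, j)" by fastforce
      show "expdecay (u q) t1" using coord_decay[OF t1, of i j] q ij unfolding u_def by simp
    qed
    moreover have "u p t = (-1) * (\<Sum>q\<in>idx I - {(0,0)}. u q t)" if "t \<ge> t1" for t
    proof -
      have "(\<Sum>p\<in>idx I. u p t) = u (0,0) t + (\<Sum>q\<in>idx I - {(0,0)}. u q t)"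
        by (rule sum.remove) auto
      then show ?thesis using sum0[of t] that t1 True by simp
    qed
    ultimately show ?thesis by (rule expdecay_cong[rotated])
  qed
  have "expdecay (\<lambda>t. \<Sum>p\<in>idx I. \<bar>u p t\<bar>) t1"
    by (intro expdecay_sum expdecay_abs dec) auto
  then obtain C \<beta> where Cb: "\<beta> > 0" "C \<ge> 0" "\<And>t. t \<ge> t1 \<Longrightarrow> \<bar>\<Sum>p\<in>idx I. \<bar>u p t\<bar>\<bar> \<le> C * exp (- \<beta> * (t - t1))"
    using expdecayE by blast
  have dist_le: "state_dist I (x t) (xstar lam d) \<le> (\<Sum>p\<in>idx I. \<bar>u p t\<bar>)" for t
  proof -
    have "state_dist I (x t) (xstar lam d) = L2_set (\<lambda>p. u p t) (idx I)"
      unfolding state_dist_def L2_set_def u_def by (simp add: split_beta)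
    also have "\<dots> \<le> (\<Sum>p\<in>idx I. \<bar>u p t\<bar>)" by (rule L2_set_le_sum_abs)
    finally show ?thesis .
  qed
  define M where "M = real (card (idx I))"
  have uabs: "\<bar>u p t\<bar> \<le> 1" if "t \<ge> 0" "p \<in> idx I" for p t
  proof -
    obtain i j where ij: "p = (i, j)" by fastforce
    have S: "x t \<in> simplexS I" using xS that by simp
    have x0: "x t i j \<ge> 0" using simplex_nn[OF S] .
    have "x t i j \<le> (\<Sum>q\<in>idx I. x t (fst q) (snd q))"
      using member_le_sum[of p "idx I" "\<lambda>q. x t (fst q) (snd q)"] simplex_nn[OF S] that ij by auto
    also have "\<dots> = 1" using simplex_one[OF S] unfolding Phi_def by simp
    finally have x1: "x t i j \<le> 1" .
    have dd: "real d \<ge> 2" using assms by simp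
    have z: "0 \<le> xstar lam d i j \<and> xstar lam d i j \<le> 1"
      using assms dd by (auto simp: xstar_def field_simps)
    show ?thesis unfolding u_def using ij x0 x1 z by auto
  qed
  have Mb: "(\<Sum>p\<in>idx I. \<bar>u p t\<bar>) \<le> M" if "t \<ge> 0" for t
  proof -
    have "(\<Sum>p\<in>idx I. \<bar>u p t\<bar>) \<le> (\<Sum>p\<in>idx I. 1)" using uabs that by (intro sum_mono) auto
    then show ?thesis unfolding M_def by simp
  qed
  have M0: "M \<ge> 0" unfolding M_def by simp
  define \<alpha> where "\<alpha> = (C + M) * exp (\<beta> * t1) + 1"
  have \<alpha>: "\<alpha> > 0" unfolding \<alpha>_def using Cb M0 by (simp add: add_nonneg_pos)
  show ?thesis
  proof (rule exI[of _ \<alpha>], rule conjI[OF \<alpha>], rule exI[of _ \<beta>], rule conjI[OF Cb(1)], intro allI impI)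
    fix t :: real assume t: "0 \<le> t"
    have ee: "exp (- \<beta> * t) * exp (\<beta> * t1) = exp (- \<beta> * (t - t1))"
      by (simp add: mult_exp_exp algebra_simps)
    have pos: "exp (- \<beta> * t) > 0" by simp
    show "state_dist I (x t) (xstar lam d) \<le> \<alpha> * exp (- \<beta> * t)"
    proof (cases "t \<ge> t1")
      case True
      have "state_dist I (x t) (xstar lam d) \<le> C * exp (- \<beta> * (t - t1))"
        using dist_le[of t] Cb(3)[OF True] by linarith
      also have "\<dots> = C * exp (\<beta> * t1) * exp (- \<beta> * t)" using ee by (simp add: mult.commute mult.left_commute)
      also have "\<dots> \<le> \<alpha> * exp (- \<beta> * t)"
        unfolding \<alpha>_def using M0 pos by (intro mult_right_mono) (auto simp: algebra_simps)
      finally show ?thesis .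
    next
      case False
      have "state_dist I (x t) (xstar lam d) \<le> M" using dist_le[of t] Mb[OF t] by linarith
      also have "\<dots> \<le> M * (exp (\<beta> * t1) * exp (- \<beta> * t))"
      proof -
        have "exp (\<beta> * t1) * exp (- \<beta> * t) = exp (\<beta> * (t1 - t))" by (simp add: mult_exp_exp algebra_simps)
        also have "\<dots> \<ge> 1" using False Cb(1) by simp
        finally show ?thesis using M0 by (simp add: mult_le_cancel_left1)
      qed
      also have "\<dots> \<le> \<alpha> * exp (- \<beta> * t)"
        unfolding \<alpha>_def using Cb(2) pos by (simp add: algebra_simps mult_right_mono)
      finally show ?thesis .
    qed
  qed
qed


end
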